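(* Let $\mathcal{H}_A$, $\mathcal{H}_B$, $\mathcal{H}_{B'}$ be finite-dimensional Hilbert spaces, let $\rho_{AB}$ be a quantum state on $\mathcal{H}_A\otimes\mathcal{H}_B$, let $\epsilon\ge 0$, and let $\mathcal{F}$ be a trace-preserving completely positive map from system $B$ to system $B'$. Then $$\bar{R}_\epsilon(A|B)_{\rho}\le \bar{R}_\epsilon(A|B')_{\mathcal{F}(\rho)},$$ where $\mathcal{F}(\rho)$ denotes the state $(\mathrm{id}_A\otimes\mathcal{F})(\rho_{AB})$ on $\mathcal{H}_A\otimes\mathcal{H}_{B'}$.
   Context: All Hilbert spaces are finite-dimensional. For a Hermitian operator $X=\sum_i\lambda_iE_i$ (spectral decomposition), $\{X\le 0\}=\sum_{i:\lambda_i\le 0}E_i$ denotes the projection onto the nonpositive eigenspace; $\{X\ge0\}$ etc. are defined analogously. Logarithms are base 2. For a state $\rho_{AB}$ on $\mathcal{H}_A\otimes\mathcal{H}_B$ with marginal $\rho_B=\mathrm{Tr}_A\rho_{AB}$, set $\rho^{(2)}_B=\mathrm{Tr}_A[\rho_{AB}^2]$. For $\epsilon\ge0$, the information spectrum collision entropy is $$R_\epsilon(A|B)_\rho=\sup\big\{\lambda : \mathrm{Tr}\big[\{\rho^{(2)}_B-2^{-\lambda}\rho_B^2\le 0\}\rho_B\big]\ge 1-\epsilon\big\},$$ and the version with optimal side information is $$\bar{R}_\epsilon(A|B)_\rho=\sup_{\mathcal{H}_C,\ \rho_{ABC}:\ \mathrm{Tr}_C[\rho_{ABC}]=\rho_{AB}}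 R_\epsilon(A|BC)_\rho,$$ the supremum over all Hilbert spaces $\mathcal{H}_C$ and states $\rho_{ABC}$ on $\mathcal{H}_A\otimes\mathcal{H}_B\otimes\mathcal{H}_C$ extending $\rho_{AB}$, where $R_\epsilon(A|BC)_\rho$ is $R_\epsilon$ with $B$ replaced by the composite system $BC$ (so $\rho^{(2)}_{BC}=\mathrm{Tr}_A[\rho_{ABC}^2]$). *)

theory Defs
  imports Complex_Main "HOL-Library.Extended_Real" "Jordan_Normal_Form.Char_Poly"
begin

text \<open>Operators on a d-dimensional Hilbert space are complex d x d matrices.
  The composite space of systems of dimensions d1, d2 is indexed by i*d2 + j.\<close>

definition adj :: "complex mat \<Rightarrow> complex mat" where
  "adj M = mat (dim_col M) (dim_row M) (\<lambda>(i,j). cnj (M $$ (j,i)))"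

definition hermitian :: "complex mat \<Rightarrow> bool" where
  "hermitian M \<longleftrightarrow> dim_row M = dim_col M \<and> adj M = M"

definition tr :: "complex mat \<Rightarrow> complex" where
  "tr M = (\<Sum>i<dim_row M. M $$ (i,i))"

definition psd :: "nat \<Rightarrow> complex mat \<Rightarrow> bool" where
  "psd n M \<longleftrightarrow> M \<in> carrier_mat n n \<and> hermitian M \<and>
     (\<forall>v \<in> carrier_vec n. 0 \<le> Re (conjugate v \<bullet> (M *\<^sub>v v)))"

definition density :: "nat \<Rightarrow> complex mat \<Rightarrow> bool" where
  "density n \<rho> \<longleftrightarrow> psd n \<rho> \<and> tr \<rho> = 1"

definition eigspace :: "complex mat \<Rightarrow> real \<Rightarrow> complex vec set" where
  "eigspace M l = {v \<in> carrier_vec (dim_row M). M *\<^sub>v v = complex_of_real l \<cdot>\<^sub>v v}"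

definition orth_proj :: "nat \<Rightarrow> complex vec set \<Rightarrow> complex mat" where
  "orth_proj n S = (THE P. P \<in> carrier_mat n n \<and> P * P = P \<and> adj P = P \<and>
                          (\<lambda>v. P *\<^sub>v v) ` carrier_vec n = S)"

text \<open>{X <= 0}: sum of the spectral projections E_lambda over the eigenvalues lambda <= 0
  (for Hermitian X all eigenvalues are real).\<close>
definition nonpos_proj :: "complex mat \<Rightarrow> complex mat" where
  "nonpos_proj X =
     foldr (\<lambda>l acc. orth_proj (dim_row X) (eigspace X l) + acc)
       (sorted_list_of_set {l::real. eigenvalue X (complex_of_real l) \<and> l \<le> 0})
       (0\<^sub>m (dim_row X) (dim_row X))"

definition ptrace_first :: "nat \<Rightarrow> nat \<Rightarrow> complex mat \<Rightarrow> complex mat" where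
  "ptrace_first dA dB M = mat dB dB (\<lambda>(j,j'). \<Sum>i<dA. M $$ (i*dB + j, i*dB + j'))"

definition ptrace_last :: "nat \<Rightarrow> nat \<Rightarrow> complex mat \<Rightarrow> complex mat" where
  "ptrace_last dX dC M = mat dX dX (\<lambda>(k,k'). \<Sum>c<dC. M $$ (k*dC + c, k'*dC + c))"

definition R_eps :: "nat \<Rightarrow> nat \<Rightarrow> real \<Rightarrow> complex mat \<Rightarrow> ereal" where
  "R_eps dA dB \<epsilon> \<rho> =
    (let \<rho>B = ptrace_first dA dB \<rho>; \<rho>2 = ptrace_first dA dB (\<rho> * \<rho>) in
     Sup {ereal l | l. 1 - \<epsilon> \<le>
        Re (tr (nonpos_proj (\<rho>2 - complex_of_real (2 powr (- l)) \<cdot>\<^sub>m (\<rho>B * \<rho>B)) * \<rho>B))})"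

definition R_bar :: "nat \<Rightarrow> nat \<Rightarrow> real \<Rightarrow> complex mat \<Rightarrow> ereal" where
  "R_bar dA dB \<epsilon> \<rho> =
     Sup {R_eps dA (dB * dC) \<epsilon> \<sigma> | dC \<sigma>.
            density (dA * dB * dC) \<sigma> \<and> ptrace_last (dA * dB) dC \<sigma> = \<rho>}"

text \<open>(id_n (x) F)(M), where M acts on C^n (x) C^dB and F maps dB x dB to dB' x dB' matrices
  (defined blockwise, i.e. by linear extension).\<close>
definition id_tensor :: "nat \<Rightarrow> nat \<Rightarrow> nat \<Rightarrow> (complex mat \<Rightarrow> complex mat) \<Rightarrow> complex mat \<Rightarrow> complex mat" where
  "id_tensor n dB dB' F M = mat (n * dB') (n * dB') (\<lambda>(i,j).
      F (mat dB dB (\<lambda>(k,l). M $$ ((i div dB') * dB + k, (j div dB') * dB + l))) $$ (i mod dB', j mod dB'))"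

definition cptp :: "nat \<Rightarrow> nat \<Rightarrow> (complex mat \<Rightarrow> complex mat) \<Rightarrow> bool" where
  "cptp dB dB' F \<longleftrightarrow>
     (\<forall>X \<in> carrier_mat dB dB. F X \<in> carrier_mat dB' dB') \<and>
     (\<forall>X \<in> carrier_mat dB dB. \<forall>Y \<in> carrier_mat dB dB. F (X + Y) = F X + F Y) \<and>
     (\<forall>X \<in> carrier_mat dB dB. \<forall>c. F (c \<cdot>\<^sub>m X) = c \<cdot>\<^sub>m F X) \<and>
     (\<forall>X \<in> carrier_mat dB dB. tr (F X) = tr X) \<and>
     (\<forall>n M. psd (n * dB) M \<longrightarrow> psd (n * dB') (id_tensor n dB dB' F M))"

end

theory Submission
  imports Defs
begin

lemma sum_lessThan_plus: fixes n b :: nat shows "(\<Sum>r<n+b. f r) = (\<Sum>r<n. f r) + (\<Sum>j<b. f (n+j)::'a::comm_monoid_add)"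
  by (induct b) (simp_all add: add.assoc)

lemma sum_split_mult: fixes a b :: nat shows "(\<Sum>r<a*b. f r) = (\<Sum>i<a. \<Sum>j<b. f (i*b+j)::'a::comm_monoid_add)"
proof (induct a)
  case 0 then show ?case by simp
next
  case (Suc a)
  have "(\<Sum>r<Suc a*b. f r) = (\<Sum>r<a*b + b. f r)" by (simp add: add.commute)
  also have "\<dots> = (\<Sum>r<a*b. f r) + (\<Sum>j<b. f (a*b+j))"
    by (rule sum_lessThan_plus)
  finally show ?case using Suc by (simp add: add.commute)
qed



lemma mult_entry: "A \<in> carrier_mat n k \<Longrightarrow> B \<in> carrier_mat k m \<Longrightarrow> i < n \<Longrightarrow> j < m \<Longrightarrow>
  (A * B) $$ (i,j) = (\<Sum>l<k. A $$ (i,l) * B $$ (l,j))"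
  by (auto simp: scalar_prod_def lessThan_atLeast0 intro!: sum.cong)

lemma mult_vec_entry: "A \<in> carrier_mat n k \<Longrightarrow> v \<in> carrier_vec k \<Longrightarrow> i < n \<Longrightarrow>
  (A *\<^sub>v v) $ i = (\<Sum>l<k. A $$ (i,l) * v $ l)"
  by (auto simp: scalar_prod_def lessThan_atLeast0 intro!: sum.cong)

lemma row_col: "A \<in> carrier_mat n k \<Longrightarrow> B \<in> carrier_mat k m \<Longrightarrow> i < n \<Longrightarrow> j < m \<Longrightarrow>
  row A i \<bullet> col B j = (\<Sum>l<k. A $$ (i,l) * B $$ (l,j))"
  by (auto simp: scalar_prod_def lessThan_atLeast0 intro!: sum.cong)

lemma row_vec: "A \<in> carrier_mat n k \<Longrightarrow> v \<in> carrier_vec k \<Longrightarrow> i < n \<Longrightarrow>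
  row A i \<bullet> v = (\<Sum>l<k. A $$ (i,l) * v $ l)"
  by (auto simp: scalar_prod_def lessThan_atLeast0 intro!: sum.cong)

lemma adj_carrier[simp]: "M \<in> carrier_mat n m \<Longrightarrow> adj M \<in> carrier_mat m n"
  by (auto simp: adj_def)
lemma adj_dims[simp]: "dim_row (adj M) = dim_col M" "dim_col (adj M) = dim_row M"
  by (auto simp: adj_def)
lemma adj_index[simp]: "i < dim_col M \<Longrightarrow> j < dim_row M \<Longrightarrow> adj M $$ (i,j) = cnj (M $$ (j,i))"
  by (auto simp: adj_def)
lemma adj_mult_vec_carrier[simp]: "A \<in> carrier_mat n m \<Longrightarrow> v \<in> carrier_vec n \<Longrightarrow> adj A *\<^sub>v v \<in> carrier_vec m"
  by (rule mult_mat_vec_carrier[OF adj_carrier])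
lemma adj_adj[simp]: "adj (adj M) = M"
  by (auto simp: adj_def)
lemma adj_mult: assumes "A \<in> carrier_mat n k" "B \<in> carrier_mat k m"
  shows "adj (A * B) = adj B * adj A"
proof (rule eq_matI)
  fix i j assume ij: "i < dim_row (adj B * adj A)" "j < dim_col (adj B * adj A)"
  then have ij': "i < m" "j < n" using assms by auto
  have "adj (A * B) $$ (i,j) = cnj (\<Sum>l<k. A $$ (j,l) * B $$ (l,i))"
    using assms ij' by (simp add: row_col)
  also have "\<dots> = (\<Sum>l<k. adj B $$ (i,l) * adj A $$ (l,j))"
    using assms ij' by (auto simp: cnj_sum mult.commute intro!: sum.cong)
  also have "\<dots> = (adj B * adj A) $$ (i,j)"
    using assms ij' by (simp add: row_col[of _ m k _ n])
  finally show "adj (A * B) $$ (i,j) = (adj B * adj A) $$ (i,j)" .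
qed (use assms in auto)
lemma adj_add: assumes "A \<in> carrier_mat n m" "B \<in> carrier_mat n m"
  shows "adj (A + B) = adj A + adj B"
  using assms by (auto intro!: eq_matI)
lemma adj_minus: assumes "A \<in> carrier_mat n m" "B \<in> carrier_mat n m"
  shows "adj (A - B) = adj A - adj B"
  using assms by (auto intro!: eq_matI)
lemma adj_smult: "adj (c \<cdot>\<^sub>m A) = cnj c \<cdot>\<^sub>m adj A"
  by (auto intro!: eq_matI)
lemma adj_one[simp]: "adj (1\<^sub>m n) = 1\<^sub>m n"
  by (auto intro!: eq_matI)
lemma adj_zero[simp]: "adj (0\<^sub>m n m) = 0\<^sub>m m n"
  by (auto intro!: eq_matI)

lemma tr_comm: assumes "A \<in> carrier_mat n m" "B \<in> carrier_mat m n"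
  shows "tr (A * B) = tr (B * A)"
proof -
  have "tr (A * B) = (\<Sum>i<n. \<Sum>l<m. A $$ (i,l) * B $$ (l,i))"
    using assms by (auto simp: tr_def row_col intro!: sum.cong)
  also have "\<dots> = (\<Sum>l<m. \<Sum>i<n. B $$ (l,i) * A $$ (i,l))"
    by (subst sum.swap) (simp add: mult.commute)
  also have "\<dots> = tr (B * A)"
    using assms by (auto simp: tr_def row_col intro!: sum.cong)
  finally show ?thesis .
qed

lemma tr_add: "A \<in> carrier_mat n n \<Longrightarrow> B \<in> carrier_mat n n \<Longrightarrow> tr (A + B) = tr A + tr B"
  by (auto simp: tr_def sum.distrib)
lemma tr_minus: "A \<in> carrier_mat n n \<Longrightarrow> B \<in> carrier_mat n n \<Longrightarrow> tr (A - B) = tr A - tr B"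
  by (auto simp: tr_def sum_subtractf)
lemma tr_zero[simp]: "tr (0\<^sub>m n n) = 0"
  by (auto simp: tr_def)
lemma tr_smult: "A \<in> carrier_mat n n \<Longrightarrow> tr (c \<cdot>\<^sub>m A) = c * tr A"
  by (auto simp: tr_def sum_distrib_left intro!: sum.cong)

lemma cip_sum: "v \<in> carrier_vec n \<Longrightarrow> w \<in> carrier_vec n \<Longrightarrow> conjugate v \<bullet> w = (\<Sum>i<n. cnj (v $ i) * w $ i)"
  by (auto simp: scalar_prod_def lessThan_atLeast0 intro!: sum.cong)

lemma inner_adj: assumes A: "A \<in> carrier_mat n m" and v: "v \<in> carrier_vec n" and w: "w \<in> carrier_vec m"
  shows "conjugate v \<bullet> (A *\<^sub>v w) = conjugate (adj A *\<^sub>v v) \<bullet> w"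
proof -
  have "conjugate v \<bullet> (A *\<^sub>v w) = (\<Sum>i<n. \<Sum>l<m. cnj (v$i) * (A $$ (i,l) * w $ l))"
    using assms by (auto simp: cip_sum[of _ n] row_vec sum_distrib_left intro!: sum.cong)
  also have "\<dots> = (\<Sum>l<m. \<Sum>i<n. cnj (v$i) * (A $$ (i,l) * w $ l))"
    by (rule sum.swap)
  also have "\<dots> = (\<Sum>l<m. cnj ((adj A *\<^sub>v v) $ l) * w $ l)"
    using assms by (auto simp: row_vec[of _ m n] cnj_sum sum_distrib_left mult_ac intro!: sum.cong)
  also have "\<dots> = conjugate (adj A *\<^sub>v v) \<bullet> w"
    using assms by (subst cip_sum[of _ m]) auto
  finally show ?thesis .
qed

lemma psd_conj: assumes "psd n S" "U \<in> carrier_mat m n"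
  shows "psd m (U * S * adj U)"
proof -
  have S: "S \<in> carrier_mat n n" "adj S = S" using assms(1) by (auto simp: psd_def hermitian_def)
  have C: "U * S * adj U \<in> carrier_mat m m" using S assms by auto
  have US: "U * S \<in> carrier_mat m n" using S assms by auto
  have "adj (U * S * adj U) = adj (adj U) * adj (U * S)"
    using adj_mult[OF US adj_carrier[OF assms(2)]] .
  also have "\<dots> = U * (adj S * adj U)" using adj_mult[OF assms(2) S(1)] by simp
  also have "\<dots> = U * S * adj U" using S assms by (simp add: assoc_mult_mat[of _ m n _ n _ m])
  finally have H: "adj (U * S * adj U) = U * S * adj U" .
  { fix v :: "complex vec" assume v: "v \<in> carrier_vec m"
    let ?w = "adj U *\<^sub>v v"
    have w: "?w \<in> carrier_vec n" using mult_mat_vec_carrier[OF adj_carrier[OF assms(2)] v] .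
    have "conjugate v \<bullet> ((U * S * adj U) *\<^sub>v v) = conjugate v \<bullet> (U *\<^sub>v (S *\<^sub>v ?w))"
      using S assms v assoc_mult_mat_vec[OF US adj_carrier[OF assms(2)]] assoc_mult_mat_vec[OF assms(2) S(1) w] by simp
    also have "\<dots> = conjugate ?w \<bullet> (S *\<^sub>v ?w)"
      using S assms v w by (subst inner_adj[of _ m n]) auto
    finally have "0 \<le> Re (conjugate v \<bullet> ((U * S * adj U) *\<^sub>v v))"
      using assms(1) w by (auto simp: psd_def)
  }
  then show ?thesis using C H by (auto simp: psd_def hermitian_def)
qed

lemma psd_one: "psd n (1\<^sub>m n)"
proof -
  { fix v :: "complex vec" assume v: "v \<in> carrier_vec n"
    have "conjugate v \<bullet> (1\<^sub>m n *\<^sub>v v) = (\<Sum>i<n. cnj (v$i) * v$i)" using v by (simp add: cip_sum)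
    also have "Re \<dots> = (\<Sum>i<n. (Re (v$i))^2 + (Im (v$i))^2)" by (simp add: power2_eq_square)
    finally have "0 \<le> Re (conjugate v \<bullet> (1\<^sub>m n *\<^sub>v v))" by (simp add: sum_nonneg)
  }
  then show ?thesis by (auto simp: psd_def hermitian_def)
qed

lemma psd_outer: "M \<in> carrier_mat n k \<Longrightarrow> psd n (M * adj M)"
  using psd_conj[OF psd_one, of M n k] by simp



definition isproj :: "nat \<Rightarrow> complex mat \<Rightarrow> bool" where
  "isproj n P \<longleftrightarrow> P \<in> carrier_mat n n \<and> P * P = P \<and> adj P = P"

abbreviation rng :: "nat \<Rightarrow> complex mat \<Rightarrow> complex vec set" where
  "rng n P \<equiv> (\<lambda>v. P *\<^sub>v v) ` carrier_vec n"

lemma mat_eq_by_vec: fixes A B :: "complex mat" assumes "A \<in> carrier_mat n m" "B \<in> carrier_mat n m"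
  and "\<And>v. v \<in> carrier_vec m \<Longrightarrow> A *\<^sub>v v = B *\<^sub>v v"
  shows "A = B"
proof (rule eq_matI)
  fix i j assume ij: "i < dim_row B" "j < dim_col B"
  have e: "\<And>C :: complex mat. C \<in> carrier_mat n m \<Longrightarrow> i < n \<Longrightarrow> j < m \<Longrightarrow> (C *\<^sub>v unit_vec m j) $ i = C $$ (i,j)"
    by (simp add: row_vec[of _ n m] if_distrib cong: if_cong)
  show "A $$ (i,j) = B $$ (i,j)" using e[OF assms(1)] e[OF assms(2)] assms(3)[of "unit_vec m j"] ij assms(2) by auto
qed (use assms in auto)

lemma proj_carrier: "isproj n P \<Longrightarrow> P \<in> carrier_mat n n" by (simp add: isproj_def)

lemma proj_fix: assumes "isproj n P" "x \<in> rng n P" shows "P *\<^sub>v x = x"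
proof -
  obtain y where y: "y \<in> carrier_vec n" "x = P *\<^sub>v y" using assms by auto
  have PC: "P \<in> carrier_mat n n" "P * P = P" using assms by (auto simp: isproj_def)
  have "(P * P) *\<^sub>v y = P *\<^sub>v (P *\<^sub>v y)" using assoc_mult_mat_vec[OF PC(1) PC(1) y(1)] .
  then show ?thesis using y PC by simp
qed

lemma rng_carrier: "isproj n P \<Longrightarrow> rng n P \<subseteq> carrier_vec n"
  by (auto simp: isproj_def)

lemma ip_proj: assumes "isproj n P" "x \<in> carrier_vec n" "y \<in> carrier_vec n"
  shows "conjugate x \<bullet> (P *\<^sub>v y) = conjugate (P *\<^sub>v x) \<bullet> y"
  using inner_adj[of P n n x y] assms by (auto simp: isproj_def)

lemma proj_unique: assumes P: "isproj n P" and Q: "isproj n Q" and r: "rng n P = rng n Q"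
  shows "P = Q"
proof -
  have PC: "P \<in> carrier_mat n n" and QC: "Q \<in> carrier_mat n n" using P Q by (auto simp: isproj_def)
  have QP: "Q * P = P"
  proof (rule mat_eq_by_vec[of _ n n])
    fix v :: "complex vec" assume v: "v \<in> carrier_vec n"
    have "P *\<^sub>v v \<in> rng n P" using v by blast
    then have "P *\<^sub>v v \<in> rng n Q" unfolding r .
    then have "Q *\<^sub>v (P *\<^sub>v v) = P *\<^sub>v v" by (rule proj_fix[OF Q])
    then show "(Q * P) *\<^sub>v v = P *\<^sub>v v" using assoc_mult_mat_vec[OF QC PC v] by simp
  qed (use PC QC in simp_all)
  have PQ: "P * Q = Q"
  proof (rule mat_eq_by_vec[of _ n n])
    fix v :: "complex vec" assume v: "v \<in> carrier_vec n"
    have "Q *\<^sub>v v \<in> rng n Q" using v by blast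
    then have "Q *\<^sub>v v \<in> rng n P" unfolding r .
    then have "P *\<^sub>v (Q *\<^sub>v v) = Q *\<^sub>v v" by (rule proj_fix[OF P])
    then show "(P * Q) *\<^sub>v v = Q *\<^sub>v v" using assoc_mult_mat_vec[OF PC QC v] by simp
  qed (use PC QC in simp_all)
  have "P = adj P" using P unfolding isproj_def by argo
  also have "\<dots> = adj (Q * P)" using QP by simp
  also have "\<dots> = adj P * adj Q" using adj_mult[OF QC PC] .
  also have "\<dots> = P * Q" using P Q unfolding isproj_def by argo
  also have "\<dots> = Q" by (rule PQ)
  finally show ?thesis .
qed

lemma orth_proj_eq: assumes "isproj n P" "rng n P = S" shows "orth_proj n S = P"
proof -
  have "\<And>Q. Q \<in> carrier_mat n n \<and> Q * Q = Q \<and> adj Q = Q \<and> rng n Q = S \<Longrightarrow> Q = P"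
    using proj_unique[OF _ assms(1)] assms(2) by (auto simp: isproj_def)
  moreover have "P \<in> carrier_mat n n \<and> P * P = P \<and> adj P = P \<and> rng n P = S"
    using assms by (simp add: isproj_def)
  ultimately show ?thesis unfolding orth_proj_def
    by (rule the_equality[rotated]) blast
qed

lemma rng_add: assumes P: "isproj n P" and x: "x \<in> rng n P" and y: "y \<in> rng n P"
  shows "x + y \<in> rng n P"
proof -
  obtain a b where ab: "a \<in> carrier_vec n" "b \<in> carrier_vec n" "x = P *\<^sub>v a" "y = P *\<^sub>v b" using x y by auto
  have PC: "P \<in> carrier_mat n n" using P by (simp add: isproj_def)
  have "P *\<^sub>v (a + b) = P *\<^sub>v a + P *\<^sub>v b" by (rule mult_add_distrib_mat_vec[OF PC ab(1,2)])
  then have "x + y = P *\<^sub>v (a + b)" using ab by simp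
  moreover have "a + b \<in> carrier_vec n" using ab by simp
  ultimately show ?thesis by (rule image_eqI)
qed

lemma rng_smult: assumes P: "isproj n P" and x: "x \<in> rng n P"
  shows "k \<cdot>\<^sub>v x \<in> rng n P"
proof -
  obtain a where a: "a \<in> carrier_vec n" "x = P *\<^sub>v a" using x by auto
  have PC: "P \<in> carrier_mat n n" using P by (simp add: isproj_def)
  have "P *\<^sub>v (k \<cdot>\<^sub>v a) = k \<cdot>\<^sub>v (P *\<^sub>v a)" by (rule mult_mat_vec[OF PC a(1)])
  then have "k \<cdot>\<^sub>v x = P *\<^sub>v (k \<cdot>\<^sub>v a)" using a by simp
  moreover have "k \<cdot>\<^sub>v a \<in> carrier_vec n" using a by simp
  ultimately show ?thesis by (rule image_eqI)
qed



lemma ip_self_zero: fixes v :: "complex vec" assumes "v \<in> carrier_vec n" "conjugate v \<bullet> v = 0" shows "v = 0\<^sub>v n"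
proof -
  have "v \<bullet>c v = 0" using assms conjugate_vec_sprod_comm[of v n v] by simp
  then show ?thesis using conjugate_square_eq_0_vec[OF assms(1)] by simp
qed

lemma zero_mat_mult_vec[simp]: "v \<in> carrier_vec m \<Longrightarrow> 0\<^sub>m n m *\<^sub>v v = 0\<^sub>v n"
  by (rule eq_vecI) (auto simp: row_vec[of _ n m])

lemma smult_zero_vec'[simp]: "(k::complex) \<cdot>\<^sub>v 0\<^sub>v n = 0\<^sub>v n"
  by (rule eq_vecI) auto

lemma smult_0_vec'[simp]: "w \<in> carrier_vec n \<Longrightarrow> (0::complex) \<cdot>\<^sub>v w = 0\<^sub>v n"
  by (rule eq_vecI) auto

fun spn :: "nat \<Rightarrow> complex vec list \<Rightarrow> complex vec set" where
  "spn n [] = {0\<^sub>v n}"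
| "spn n (a # vs) = {x + t \<cdot>\<^sub>v a | x t. x \<in> spn n vs}"

lemma spn_carrier: "set vs \<subseteq> carrier_vec n \<Longrightarrow> spn n vs \<subseteq> carrier_vec n"
  by (induct vs) auto

lemma spn_zero: "set vs \<subseteq> carrier_vec n \<Longrightarrow> 0\<^sub>v n \<in> spn n vs"
proof (induct vs)
  case (Cons a vs)
  then have e: "0\<^sub>v n + 0 \<cdot>\<^sub>v a = 0\<^sub>v n" by auto
  have "0\<^sub>v n \<in> spn n vs" using Cons by simp
  then have "0\<^sub>v n + 0 \<cdot>\<^sub>v a \<in> spn n (a # vs)" unfolding spn.simps mem_Collect_eq by blast
  then show ?case unfolding e .
qed simp

lemma spn_mem: "set vs \<subseteq> carrier_vec n \<Longrightarrow> u \<in> set vs \<Longrightarrow> u \<in> spn n vs"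
proof (induct vs)
  case (Cons a vs)
  show ?case
  proof (cases "u = a")
    case True
    have e: "0\<^sub>v n + 1 \<cdot>\<^sub>v a = u" using True Cons by auto
    have "0\<^sub>v n \<in> spn n vs" using spn_zero[of vs n] Cons by simp
    then have "0\<^sub>v n + 1 \<cdot>\<^sub>v a \<in> spn n (a # vs)" unfolding spn.simps mem_Collect_eq by blast
    then show ?thesis unfolding e .
  next
    case False
    then have "u \<in> spn n vs" using Cons by auto
    moreover have uc: "u \<in> carrier_vec n" using Cons False by auto
    moreover have e: "u + 0 \<cdot>\<^sub>v a = u" using Cons uc by auto
    ultimately have "u + 0 \<cdot>\<^sub>v a \<in> spn n (a # vs)" unfolding spn.simps mem_Collect_eq by blast
    then show ?thesis unfolding e .
  qed
qed simp

lemma orth_spn: assumes "set vs \<subseteq> carrier_vec n" "x \<in> carrier_vec n"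
  "\<And>u. u \<in> set vs \<Longrightarrow> conjugate u \<bullet> x = 0"
  shows "y \<in> spn n vs \<Longrightarrow> conjugate y \<bullet> x = 0"
  using assms
proof (induct vs arbitrary: y)
  case Nil then show ?case by simp
next
  case (Cons a vs)
  obtain z t where y: "y = z + t \<cdot>\<^sub>v a" "z \<in> spn n vs" using Cons(2) by auto
  have z: "z \<in> carrier_vec n" using spn_carrier[of vs n] Cons y by auto
  have a: "a \<in> carrier_vec n" using Cons by auto
  have "conjugate y \<bullet> x = (\<Sum>i<n. cnj (z$i) * x$i) + cnj t * (\<Sum>i<n. cnj (a$i) * x$i)"
    using y z a Cons by (simp add: cip_sum[of _ n] algebra_simps sum.distrib sum_distrib_left)
  also have "\<dots> = conjugate z \<bullet> x + cnj t * (conjugate a \<bullet> x)"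
    using z a Cons by (simp add: cip_sum[of _ n])
  also have "\<dots> = 0" using Cons y z by auto
  finally show ?case .
qed

lemma proj_zero: "isproj n (0\<^sub>m n n)" "rng n (0\<^sub>m n n) = {0\<^sub>v n}"
proof -
  show "isproj n (0\<^sub>m n n)" by (auto simp: isproj_def)
  show "rng n (0\<^sub>m n n) = {0\<^sub>v n}"
  proof
    show "rng n (0\<^sub>m n n) \<subseteq> {0\<^sub>v n}"
    proof
      fix y assume "y \<in> rng n (0\<^sub>m n n)"
      then obtain v where "v \<in> carrier_vec n" "y = 0\<^sub>m n n *\<^sub>v v" by (elim imageE)
      then show "y \<in> {0\<^sub>v n}" by simp
    qed
    have "0\<^sub>v n \<in> rng n (0\<^sub>m n n)" by (rule image_eqI[OF _ zero_carrier_vec]) simp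
    then show "{0\<^sub>v n} \<subseteq> rng n (0\<^sub>m n n)" by simp
  qed
qed

lemma proj_spn: "set vs \<subseteq> carrier_vec n \<Longrightarrow> \<exists>P. isproj n P \<and> rng n P = spn n vs"
proof (induct vs)
  case Nil
  have "isproj n (0\<^sub>m n n)" by (auto simp: isproj_def)
  moreover have "rng n (0\<^sub>m n n) = {0\<^sub>v n}"
  proof
    show "rng n (0\<^sub>m n n) \<subseteq> {0\<^sub>v n}"
    proof
      fix y assume "y \<in> rng n (0\<^sub>m n n)"
      then obtain v where "v \<in> carrier_vec n" "y = 0\<^sub>m n n *\<^sub>v v" by (elim imageE)
      then show "y \<in> {0\<^sub>v n}" by simp
    qed
    have "0\<^sub>v n \<in> rng n (0\<^sub>m n n)" by (rule image_eqI[OF _ zero_carrier_vec]) simp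
    then show "{0\<^sub>v n} \<subseteq> rng n (0\<^sub>m n n)" by simp
  qed
  ultimately show ?case by auto
next
  case (Cons a vs)
  then obtain Q where Q: "isproj n Q" "rng n Q = spn n vs" and a: "a \<in> carrier_vec n" by auto
  have QC: "Q \<in> carrier_mat n n" and QQ: "Q * Q = Q" and QA: "adj Q = Q" using Q by (auto simp: isproj_def)
  have Qh: "\<And>i j. i < n \<Longrightarrow> j < n \<Longrightarrow> cnj (Q $$ (j,i)) = Q $$ (i,j)"
    using QA QC by (metis adj_index carrier_matD)
  define w where "w = a - Q *\<^sub>v a"
  have w: "w \<in> carrier_vec n" using a QC by (simp add: w_def)
  have QQv: "\<And>v. v \<in> carrier_vec n \<Longrightarrow> Q *\<^sub>v (Q *\<^sub>v v) = Q *\<^sub>v v"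
    using assoc_mult_mat_vec[OF QC QC] QQ by metis
  have Qw: "Q *\<^sub>v w = 0\<^sub>v n"
    using QQv[OF a] a QC by (simp add: w_def mult_minus_distrib_mat_vec[OF QC])
  have ipQ: "\<And>v. v \<in> carrier_vec n \<Longrightarrow> conjugate w \<bullet> (Q *\<^sub>v v) = 0"
    using ip_proj[OF Q(1) w] Qw by simp
  show ?case
  proof (cases "w = 0\<^sub>v n")
    case True
    have aQ: "Q *\<^sub>v a = a"
    proof (rule eq_vecI)
      fix i assume i: "i < dim_vec a"
      have "(a - Q *\<^sub>v a) $ i = 0" using True i a unfolding w_def by simp
      then show "(Q *\<^sub>v a) $ i = a $ i" using i a QC by simp
    qed (use a QC in simp)
    have "rng n Q = spn n (a # vs)"
    proof
      show "rng n Q \<subseteq> spn n (a # vs)"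
      proof
        fix y assume y: "y \<in> rng n Q"
        then have yc: "y \<in> carrier_vec n" using rng_carrier[OF Q(1)] by auto
        have "y = y + 0 \<cdot>\<^sub>v a" using yc a by auto
        then show "y \<in> spn n (a # vs)" using y Q(2) by auto
      qed
      show "spn n (a # vs) \<subseteq> rng n Q"
      proof
        fix y assume "y \<in> spn n (a # vs)"
        then obtain x t where y: "y = x + t \<cdot>\<^sub>v a" "x \<in> rng n Q" using Q(2) by auto
        have "a \<in> rng n Q" using aQ a by (metis image_eqI)
        then have "t \<cdot>\<^sub>v a \<in> rng n Q" by (rule rng_smult[OF Q(1)])
        then show "y \<in> rng n Q" using y rng_add[OF Q(1)] by auto
      qed
    qed
    then show ?thesis using Q(1) by auto
  next
    case False
    define c where "c = conjugate w \<bullet> w"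
    have c0: "c \<noteq> 0" using ip_self_zero[OF w] False by (auto simp: c_def)
    have cc: "cnj c = c" unfolding c_def using w by (simp add: cip_sum[of _ n] cnj_sum mult.commute)
    have ipa: "conjugate w \<bullet> a = c"
    proof -
      have "a = w + Q *\<^sub>v a" using a QC by (auto simp: w_def)
      then have "conjugate w \<bullet> a = conjugate w \<bullet> w + conjugate w \<bullet> (Q *\<^sub>v a)"
        using scalar_prod_add_distrib[of "conjugate w" n w "Q *\<^sub>v a"] w a QC by (metis carrier_vec_conjugate mult_mat_vec_carrier)
      then show ?thesis using ipQ[OF a] by (simp add: c_def)
    qed
    define P where "P = mat n n (\<lambda>(i,j). Q $$ (i,j) + w $ i * cnj (w $ j) / c)"
    have PC: "P \<in> carrier_mat n n" by (simp add: P_def)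
    have Pv: "\<And>v. v \<in> carrier_vec n \<Longrightarrow> P *\<^sub>v v = Q *\<^sub>v v + ((conjugate w \<bullet> v) / c) \<cdot>\<^sub>v w"
    proof -
      fix v :: "complex vec" assume v: "v \<in> carrier_vec n"
      show "P *\<^sub>v v = Q *\<^sub>v v + ((conjugate w \<bullet> v) / c) \<cdot>\<^sub>v w"
      proof (rule eq_vecI)
        fix i assume "i < dim_vec (Q *\<^sub>v v + ((conjugate w \<bullet> v) / c) \<cdot>\<^sub>v w)"
        then have i: "i < n" using QC w by simp
        have "(P *\<^sub>v v) $ i = (\<Sum>l<n. P $$ (i,l) * v $ l)"
          using i v PC by (simp add: row_vec[of _ n n])
        also have "\<dots> = (\<Sum>l<n. Q $$ (i,l) * v $ l + w $ i * (cnj (w $ l) * v $ l) / c)"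
          using i by (intro sum.cong) (simp_all add: P_def algebra_simps)
        also have "\<dots> = (\<Sum>l<n. Q $$ (i,l) * v $ l) + w $ i * (\<Sum>l<n. cnj (w $ l) * v $ l) / c"
          by (simp add: sum.distrib sum_distrib_left sum_divide_distrib)
        finally have "(P *\<^sub>v v) $ i = (\<Sum>l<n. Q $$ (i,l) * v $ l) + w $ i * (\<Sum>l<n. cnj (w $ l) * v $ l) / c" .
        then show "(P *\<^sub>v v) $ i = (Q *\<^sub>v v + ((conjugate w \<bullet> v) / c) \<cdot>\<^sub>v w) $ i"
          using i v w QC by (simp add: row_vec[of _ n n] cip_sum[of _ n])
      qed (use PC QC w in simp_all)
    qed
    have PP: "P * P = P"
    proof (rule mat_eq_by_vec[of _ n n])
      fix v :: "complex vec" assume v: "v \<in> carrier_vec n"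
      define s where "s = (conjugate w \<bullet> v) / c"
      have u: "P *\<^sub>v v = Q *\<^sub>v v + s \<cdot>\<^sub>v w" using Pv[OF v] by (simp add: s_def)
      have uc: "Q *\<^sub>v v + s \<cdot>\<^sub>v w \<in> carrier_vec n" using v w QC by simp
      have "Q *\<^sub>v (Q *\<^sub>v v + s \<cdot>\<^sub>v w) = Q *\<^sub>v v"
        using mult_add_distrib_mat_vec[OF QC _ smult_carrier_vec[THEN iffD2, OF w], of "Q *\<^sub>v v" s] v QC
        by (simp add: QQv mult_mat_vec[OF QC w] Qw)
      moreover have "conjugate w \<bullet> (Q *\<^sub>v v + s \<cdot>\<^sub>v w) = s * c"
        using scalar_prod_add_distrib[of "conjugate w" n "Q *\<^sub>v v" "s \<cdot>\<^sub>v w"] v w QC ipQ[OF v]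
        by (simp add: c_def)
      ultimately have "P *\<^sub>v (P *\<^sub>v v) = P *\<^sub>v v"
        using u Pv[OF uc] c0 by simp
      then show "(P * P) *\<^sub>v v = P *\<^sub>v v" using assoc_mult_mat_vec[OF PC PC v] by simp
    qed (use PC in simp_all)
    have PA: "adj P = P"
    proof (rule eq_matI)
      fix i j assume "i < dim_row P" "j < dim_col P"
      then have ij: "i < n" "j < n" using PC by auto
      show "adj P $$ (i,j) = P $$ (i,j)"
        using ij PC Qh[OF ij] cc by (simp add: P_def mult.commute)
    qed (use PC in simp_all)
    have Pi: "isproj n P" using PC PP PA by (simp add: isproj_def)
    have "rng n P = spn n (a # vs)"
    proof
      show "rng n P \<subseteq> spn n (a # vs)"
      proof
        fix y assume "y \<in> rng n P"
        then obtain v where v: "v \<in> carrier_vec n" "y = P *\<^sub>v v" by auto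
        define s where "s = (conjugate w \<bullet> v) / c"
        have ys: "y = Q *\<^sub>v v + s \<cdot>\<^sub>v w" using v Pv[OF v(1)] by (simp add: s_def)
        have "y = (Q *\<^sub>v v + (- s) \<cdot>\<^sub>v (Q *\<^sub>v a)) + s \<cdot>\<^sub>v a"
          unfolding ys using v a QC by (intro eq_vecI) (auto simp: w_def algebra_simps)
        moreover have "Q *\<^sub>v v + (- s) \<cdot>\<^sub>v (Q *\<^sub>v a) \<in> spn n vs"
        proof -
          have h1: "(- s) \<cdot>\<^sub>v (Q *\<^sub>v a) \<in> rng n Q" by (rule rng_smult[OF Q(1) imageI[OF a]])
          have "Q *\<^sub>v v + (- s) \<cdot>\<^sub>v (Q *\<^sub>v a) \<in> rng n Q" by (rule rng_add[OF Q(1) imageI[OF v(1)] h1])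
          then show ?thesis unfolding Q(2) .
        qed
        ultimately show "y \<in> spn n (a # vs)" unfolding spn.simps mem_Collect_eq by blast
      qed
      show "spn n (a # vs) \<subseteq> rng n P"
      proof
        fix y assume "y \<in> spn n (a # vs)"
        then obtain x t where y: "y = x + t \<cdot>\<^sub>v a" "x \<in> spn n vs" by auto
        then have y2: "x \<in> rng n Q" unfolding Q(2) by simp
        have x: "x \<in> carrier_vec n" using y2 rng_carrier[OF Q(1)] by auto
        have Qx: "Q *\<^sub>v x = x" using proj_fix[OF Q(1) y2] .
        have "conjugate w \<bullet> x = 0" using ipQ[OF x] Qx by simp
        then have Px: "P *\<^sub>v x = x" using Pv[OF x] Qx x w by simp
        have Pa: "P *\<^sub>v a = a" using Pv[OF a] ipa c0 a QC by (intro eq_vecI) (auto simp: w_def)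
        have "P *\<^sub>v y = y"
          using y x a Px Pa mult_add_distrib_mat_vec[OF PC x smult_carrier_vec[THEN iffD2, OF a], of t]
          by (simp add: mult_mat_vec[OF PC a])
        moreover have "y \<in> carrier_vec n" using y x a by simp
        ultimately show "y \<in> rng n P" by (rule image_eqI[OF sym])
      qed
    qed
    then show ?thesis using Pi by auto
  qed
qed



lemma proj_kernel: assumes Y: "Y \<in> carrier_mat m n"
  shows "\<exists>P. isproj n P \<and> rng n P = {v \<in> carrier_vec n. Y *\<^sub>v v = 0\<^sub>v m}"
proof -
  define vs where "vs = map (col (adj Y)) [0..<m]"
  have vsC: "set vs \<subseteq> carrier_vec n" using Y by (auto simp: vs_def)
  obtain Q where Q: "isproj n Q" "rng n Q = spn n vs" using proj_spn[OF vsC] by auto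
  have QC: "Q \<in> carrier_mat n n" and QQ: "Q * Q = Q" and QA: "adj Q = Q" using Q by (auto simp: isproj_def)
  have QQv: "\<And>v. v \<in> carrier_vec n \<Longrightarrow> Q *\<^sub>v (Q *\<^sub>v v) = Q *\<^sub>v v"
    using assoc_mult_mat_vec[OF QC QC] QQ by metis
  have colip: "\<And>x j. x \<in> carrier_vec n \<Longrightarrow> j < m \<Longrightarrow> conjugate (col (adj Y) j) \<bullet> x = (Y *\<^sub>v x) $ j"
  proof -
    fix x :: "complex vec" and j assume x: "x \<in> carrier_vec n" and j: "j < m"
    have "conjugate (col (adj Y) j) \<bullet> x = (\<Sum>i<n. cnj (col (adj Y) j $ i) * x $ i)"
      using x Y j by (intro cip_sum) auto
    also have "\<dots> = (\<Sum>i<n. Y $$ (j,i) * x $ i)" using Y j by (intro sum.cong) auto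
    also have "\<dots> = (Y *\<^sub>v x) $ j" using Y j x by (simp add: row_vec[of _ m n])
    finally show "conjugate (col (adj Y) j) \<bullet> x = (Y *\<^sub>v x) $ j" .
  qed
  have key: "\<And>x. x \<in> carrier_vec n \<Longrightarrow> (Y *\<^sub>v x = 0\<^sub>v m) = (Q *\<^sub>v x = 0\<^sub>v n)"
  proof
    fix x :: "complex vec" assume x: "x \<in> carrier_vec n" and Yx: "Y *\<^sub>v x = 0\<^sub>v m"
    have o: "\<And>u. u \<in> set vs \<Longrightarrow> conjugate u \<bullet> x = 0"
      using colip[OF x] Yx by (auto simp: vs_def)
    have Qxs: "Q *\<^sub>v x \<in> spn n vs" using Q(2) x by blast
    have "conjugate (Q *\<^sub>v x) \<bullet> x = 0" by (rule orth_spn[OF vsC x o Qxs])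
    moreover have "conjugate (Q *\<^sub>v x) \<bullet> (Q *\<^sub>v x) = conjugate (Q *\<^sub>v (Q *\<^sub>v x)) \<bullet> x"
      using ip_proj[OF Q(1), of "Q *\<^sub>v x" x] x QC by simp
    ultimately have "conjugate (Q *\<^sub>v x) \<bullet> (Q *\<^sub>v x) = 0" using QQv[OF x] by simp
    then show "Q *\<^sub>v x = 0\<^sub>v n" using ip_self_zero[of "Q *\<^sub>v x" n] x QC by simp
  next
    fix x :: "complex vec" assume x: "x \<in> carrier_vec n" and Qx: "Q *\<^sub>v x = 0\<^sub>v n"
    show "Y *\<^sub>v x = 0\<^sub>v m"
    proof (rule eq_vecI)
      fix j assume "j < dim_vec (0\<^sub>v m :: complex vec)"
      then have j: "j < m" by simp
      have uC: "col (adj Y) j \<in> carrier_vec n" using Y j by simp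
      have "col (adj Y) j \<in> spn n vs" using spn_mem[OF vsC] j by (auto simp: vs_def)
      then have "col (adj Y) j \<in> rng n Q" using Q(2) by simp
      then have Qu: "Q *\<^sub>v col (adj Y) j = col (adj Y) j" by (rule proj_fix[OF Q(1)])
      have "(Y *\<^sub>v x) $ j = conjugate (col (adj Y) j) \<bullet> x" using colip[OF x j] by simp
      also have "\<dots> = conjugate (Q *\<^sub>v col (adj Y) j) \<bullet> x" using Qu by simp
      also have "\<dots> = conjugate (col (adj Y) j) \<bullet> (Q *\<^sub>v x)" using ip_proj[OF Q(1) uC x] by simp
      also have "\<dots> = 0" using Qx uC by simp
      finally show "(Y *\<^sub>v x) $ j = (0\<^sub>v m :: complex vec) $ j" using j by simp
    qed (use Y in simp)
  qed
  define P where "P = 1\<^sub>m n - Q"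
  have PC: "P \<in> carrier_mat n n" using QC unfolding P_def carrier_mat_def by simp
  have Pv: "\<And>v. v \<in> carrier_vec n \<Longrightarrow> P *\<^sub>v v = v - Q *\<^sub>v v"
    unfolding P_def using QC by (simp add: minus_mult_distrib_mat_vec[of _ n n])
  have QPv: "\<And>v. v \<in> carrier_vec n \<Longrightarrow> Q *\<^sub>v (P *\<^sub>v v) = 0\<^sub>v n"
  proof -
    fix v :: "complex vec" assume v: "v \<in> carrier_vec n"
    have "Q *\<^sub>v (P *\<^sub>v v) = Q *\<^sub>v v - Q *\<^sub>v (Q *\<^sub>v v)"
      using Pv[OF v] v QC by (simp add: mult_minus_distrib_mat_vec[OF QC])
    then show "Q *\<^sub>v (P *\<^sub>v v) = 0\<^sub>v n" using QQv[OF v] v QC by simp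
  qed
  have PP: "P * P = P"
  proof (rule mat_eq_by_vec[of _ n n])
    fix v :: "complex vec" assume v: "v \<in> carrier_vec n"
    have Pvc: "P *\<^sub>v v \<in> carrier_vec n" using PC v by simp
    have "P *\<^sub>v (P *\<^sub>v v) = P *\<^sub>v v" using Pv[OF Pvc] QPv[OF v] Pvc by simp
    then show "(P * P) *\<^sub>v v = P *\<^sub>v v" using assoc_mult_mat_vec[OF PC PC v] by simp
  qed (use PC in simp_all)
  have PA: "adj P = P" unfolding P_def using adj_minus[of "1\<^sub>m n" n n Q] QC QA by simp
  have Pi: "isproj n P" using PC PP PA by (simp add: isproj_def)
  have "rng n P = {v \<in> carrier_vec n. Y *\<^sub>v v = 0\<^sub>v m}"
  proof
    show "rng n P \<subseteq> {v \<in> carrier_vec n. Y *\<^sub>v v = 0\<^sub>v m}"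
    proof
      fix y assume "y \<in> rng n P"
      then obtain v where v: "v \<in> carrier_vec n" "y = P *\<^sub>v v" by (elim imageE)
      have yc: "y \<in> carrier_vec n" using v PC by simp
      have "Q *\<^sub>v y = 0\<^sub>v n" using QPv[OF v(1)] v by simp
      then show "y \<in> {v \<in> carrier_vec n. Y *\<^sub>v v = 0\<^sub>v m}" using key[OF yc] yc by simp
    qed
    show "{v \<in> carrier_vec n. Y *\<^sub>v v = 0\<^sub>v m} \<subseteq> rng n P"
    proof
      fix x assume "x \<in> {v \<in> carrier_vec n. Y *\<^sub>v v = 0\<^sub>v m}"
      then have x: "x \<in> carrier_vec n" "Y *\<^sub>v x = 0\<^sub>v m" by auto
      then have "Q *\<^sub>v x = 0\<^sub>v n" using key by simp
      then have "P *\<^sub>v x = x" using Pv[OF x(1)] x by simp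
      then show "x \<in> rng n P" by (rule image_eqI[OF sym x(1)])
    qed
  qed
  then show ?thesis using Pi by auto
qed

lemma smult_one_mult_vec: "v \<in> carrier_vec n \<Longrightarrow> (c \<cdot>\<^sub>m 1\<^sub>m n) *\<^sub>v v = (c::complex) \<cdot>\<^sub>v v"
  by (rule eq_vecI) (auto simp: row_vec[of _ n n] if_distrib cong: if_cong)

lemma vec_minus_zero_iff: assumes "a \<in> carrier_vec n" "b \<in> carrier_vec n"
  shows "(a - b = 0\<^sub>v n) = (a = (b :: complex vec))"
proof
  assume h: "a - b = 0\<^sub>v n"
  show "a = b"
  proof (rule eq_vecI)
    fix i assume "i < dim_vec b"
    then have i: "i < n" using assms by simp
    have "(a - b) $ i = 0" using h i by simp
    then show "a $ i = b $ i" using i assms by simp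
  qed (use assms in simp)
qed (use assms in simp)

lemma eigspace_kernel: assumes X: "X \<in> carrier_mat n n"
  shows "eigspace X l = {v \<in> carrier_vec n. (X - complex_of_real l \<cdot>\<^sub>m 1\<^sub>m n) *\<^sub>v v = 0\<^sub>v n}"
proof -
  { fix v :: "complex vec" assume v: "v \<in> carrier_vec n"
    have "(X - complex_of_real l \<cdot>\<^sub>m 1\<^sub>m n) *\<^sub>v v = X *\<^sub>v v - complex_of_real l \<cdot>\<^sub>v v"
      using X v minus_mult_distrib_mat_vec[of X n n "complex_of_real l \<cdot>\<^sub>m 1\<^sub>m n" v]
      by (simp add: smult_one_mult_vec)
    then have "((X - complex_of_real l \<cdot>\<^sub>m 1\<^sub>m n) *\<^sub>v v = 0\<^sub>v n) = (X *\<^sub>v v = complex_of_real l \<cdot>\<^sub>v v)"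
      using X v vec_minus_zero_iff[of "X *\<^sub>v v" n "complex_of_real l \<cdot>\<^sub>v v"] by simp
  }
  then show ?thesis using X by (auto simp: eigspace_def)
qed

lemma oproj_eig: assumes X: "X \<in> carrier_mat n n"
  shows "isproj n (orth_proj n (eigspace X l))" "rng n (orth_proj n (eigspace X l)) = eigspace X l"
proof -
  have Y: "X - complex_of_real l \<cdot>\<^sub>m 1\<^sub>m n \<in> carrier_mat n n" using X unfolding carrier_mat_def by simp
  obtain P where P: "isproj n P" "rng n P = eigspace X l"
    using proj_kernel[OF Y] eigspace_kernel[OF X, of l] by auto
  have "orth_proj n (eigspace X l) = P" by (rule orth_proj_eq[OF P])
  then show "isproj n (orth_proj n (eigspace X l))" "rng n (orth_proj n (eigspace X l)) = eigspace X l"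
    using P by auto
qed

lemma oproj_noneig: assumes X: "X \<in> carrier_mat n n" and ne: "\<not> eigenvalue X (complex_of_real l)"
  shows "orth_proj n (eigspace X l) = 0\<^sub>m n n"
proof -
  have "eigspace X l = {0\<^sub>v n}"
    using ne X by (auto simp: eigspace_def eigenvalue_def eigenvector_def)
  then show ?thesis using orth_proj_eq[OF proj_zero(1) proj_zero(2)] by simp
qed



lemma vec_add_minus_cancel: "a \<in> carrier_vec m \<Longrightarrow> b \<in> carrier_vec m \<Longrightarrow> a + b - a = (b :: complex vec)"
  by (intro eq_vecI) auto
lemma vec_add_minus_cancel2: "a \<in> carrier_vec m \<Longrightarrow> b \<in> carrier_vec m \<Longrightarrow> a + (b - a) = (b :: complex vec)"
  by (intro eq_vecI) auto

locale iso =
  fixes W :: "complex mat" and m n :: nat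
  assumes WC: "W \<in> carrier_mat m n" and WW: "adj W * W = 1\<^sub>m n"
begin

lemma WaC: "adj W \<in> carrier_mat n m" using WC by simp

lemma WWv: "u \<in> carrier_vec n \<Longrightarrow> adj W *\<^sub>v (W *\<^sub>v u) = u"
  using assoc_mult_mat_vec[OF WaC WC, of u] WW by simp

lemma Wv: "u \<in> carrier_vec n \<Longrightarrow> W *\<^sub>v u \<in> carrier_vec m" using WC by simp
lemma Wav: "v \<in> carrier_vec m \<Longrightarrow> adj W *\<^sub>v v \<in> carrier_vec n" using WaC by simp

lemma conjv: assumes "A \<in> carrier_mat n n" "v \<in> carrier_vec m"
  shows "(W * A * adj W) *\<^sub>v v = W *\<^sub>v (A *\<^sub>v (adj W *\<^sub>v v))"
proof -
  have WA: "W * A \<in> carrier_mat m n" using WC assms by simp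
  show ?thesis using assoc_mult_mat_vec[OF WA WaC assms(2)] assoc_mult_mat_vec[OF WC assms(1) Wav[OF assms(2)]] by simp
qed

lemma conj_carrier: assumes "A \<in> carrier_mat n n" shows "W * A * adj W \<in> carrier_mat m m"
  using mult_carrier_mat[OF mult_carrier_mat[OF WC assms] WaC] .

lemma adj_conj: assumes "A \<in> carrier_mat n n" shows "adj (W * A * adj W) = W * adj A * adj W"
proof -
  have WA: "W * A \<in> carrier_mat m n" using WC assms by simp
  have "adj (W * A * adj W) = adj (adj W) * adj (W * A)" using adj_mult[OF WA WaC] .
  also have "\<dots> = W * (adj A * adj W)" using adj_mult[OF WC assms] by simp
  also have "\<dots> = W * adj A * adj W" using assms WC by (simp add: assoc_mult_mat[of _ m n _ n _ m])
  finally show ?thesis .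
qed

definition R where "R = 1\<^sub>m m - W * adj W"

lemma RC: "R \<in> carrier_mat m m" unfolding R_def carrier_mat_def using WC by simp

lemma Rv: "v \<in> carrier_vec m \<Longrightarrow> R *\<^sub>v v = v - W *\<^sub>v (adj W *\<^sub>v v)"
proof -
  assume v: "v \<in> carrier_vec m"
  have WWa: "W * adj W \<in> carrier_mat m m" using WC by simp
  show ?thesis unfolding R_def using minus_mult_distrib_mat_vec[OF one_carrier_mat WWa v]
      assoc_mult_mat_vec[OF WC WaC v] v by simp
qed

lemma adj_R: "adj R = R"
proof -
  have WWa: "W * adj W \<in> carrier_mat m m" using WC by simp
  have "adj (W * adj W) = W * adj W" using adj_mult[OF WC WaC] by simp
  then show ?thesis unfolding R_def using adj_minus[OF one_carrier_mat WWa] by simp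
qed

lemma WaRv: "v \<in> carrier_vec m \<Longrightarrow> adj W *\<^sub>v (R *\<^sub>v v) = 0\<^sub>v n"
proof -
  assume v: "v \<in> carrier_vec m"
  have "adj W *\<^sub>v (R *\<^sub>v v) = adj W *\<^sub>v v - adj W *\<^sub>v (W *\<^sub>v (adj W *\<^sub>v v))"
    using Rv[OF v] mult_minus_distrib_mat_vec[OF WaC v Wv[OF Wav[OF v]]] by simp
  then show ?thesis using WWv[OF Wav[OF v]] Wav[OF v] by simp
qed

lemma proj_conj: assumes P: "isproj n P"
  shows "isproj m (W * P * adj W)" "rng m (W * P * adj W) = (\<lambda>u. W *\<^sub>v u) ` rng n P"
proof -
  have PC: "P \<in> carrier_mat n n" and PP: "P * P = P" and PA: "adj P = P" using P by (auto simp: isproj_def)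
  have PPv: "\<And>v. v \<in> carrier_vec n \<Longrightarrow> P *\<^sub>v (P *\<^sub>v v) = P *\<^sub>v v"
    using assoc_mult_mat_vec[OF PC PC] PP by metis
  have QC: "W * P * adj W \<in> carrier_mat m m" using conj_carrier[OF PC] .
  have QQ: "(W * P * adj W) * (W * P * adj W) = W * P * adj W"
  proof (rule mat_eq_by_vec[of _ m m])
    fix v :: "complex vec" assume v: "v \<in> carrier_vec m"
    have c1: "P *\<^sub>v (adj W *\<^sub>v v) \<in> carrier_vec n" using PC Wav[OF v] by simp
    have "((W * P * adj W) * (W * P * adj W)) *\<^sub>v v = (W * P * adj W) *\<^sub>v ((W * P * adj W) *\<^sub>v v)"
      using assoc_mult_mat_vec[OF QC QC v] .
    also have "\<dots> = W *\<^sub>v (P *\<^sub>v (adj W *\<^sub>v (W *\<^sub>v (P *\<^sub>v (adj W *\<^sub>v v)))))"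
      using conjv[OF PC v] conjv[OF PC Wv[OF c1]] by simp
    also have "\<dots> = (W * P * adj W) *\<^sub>v v" using WWv[OF c1] PPv[OF Wav[OF v]] conjv[OF PC v] by simp
    finally show "((W * P * adj W) * (W * P * adj W)) *\<^sub>v v = (W * P * adj W) *\<^sub>v v" .
  qed (use QC in simp_all)
  have QA: "adj (W * P * adj W) = W * P * adj W" using adj_conj[OF PC] PA by simp
  show "isproj m (W * P * adj W)" using QC QQ QA by (simp add: isproj_def)
  show "rng m (W * P * adj W) = (\<lambda>u. W *\<^sub>v u) ` rng n P"
  proof
    show "rng m (W * P * adj W) \<subseteq> (\<lambda>u. W *\<^sub>v u) ` rng n P"
    proof
      fix y assume "y \<in> rng m (W * P * adj W)"
      then obtain v where v: "v \<in> carrier_vec m" "y = (W * P * adj W) *\<^sub>v v" by (elim imageE)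
      have "y = W *\<^sub>v (P *\<^sub>v (adj W *\<^sub>v v))" using v conjv[OF PC v(1)] by simp
      moreover have "P *\<^sub>v (adj W *\<^sub>v v) \<in> rng n P" by (rule imageI[OF Wav[OF v(1)]])
      ultimately show "y \<in> (\<lambda>u. W *\<^sub>v u) ` rng n P" by (rule image_eqI)
    qed
    show "(\<lambda>u. W *\<^sub>v u) ` rng n P \<subseteq> rng m (W * P * adj W)"
    proof
      fix y assume "y \<in> (\<lambda>u. W *\<^sub>v u) ` rng n P"
      then obtain u where u2: "y = W *\<^sub>v u" and u1: "u \<in> rng n P" by (rule imageE)
      note u = u1 u2
      have uc: "u \<in> carrier_vec n" using u rng_carrier[OF P] by auto
      have "(W * P * adj W) *\<^sub>v y = W *\<^sub>v (P *\<^sub>v u)"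
        using conjv[OF PC Wv[OF uc]] WWv[OF uc] u by simp
      also have "\<dots> = y" using proj_fix[OF P u(1)] u by simp
      finally show "y \<in> rng m (W * P * adj W)" by (rule image_eqI[OF sym]) (use u Wv[OF uc] in simp)
    qed
  qed
qed

lemma proj_conj0: assumes P: "isproj n P"
  shows "isproj m (W * P * adj W + R)"
    "rng m (W * P * adj W + R) = {W *\<^sub>v u + z | u z. u \<in> rng n P \<and> z \<in> carrier_vec m \<and> adj W *\<^sub>v z = 0\<^sub>v n}"
proof -
  have PC: "P \<in> carrier_mat n n" and PP: "P * P = P" and PA: "adj P = P" using P by (auto simp: isproj_def)
  have PPv: "\<And>v. v \<in> carrier_vec n \<Longrightarrow> P *\<^sub>v (P *\<^sub>v v) = P *\<^sub>v v"
    using assoc_mult_mat_vec[OF PC PC] PP by metis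
  have AC: "W * P * adj W \<in> carrier_mat m m" using conj_carrier[OF PC] .
  have QC: "W * P * adj W + R \<in> carrier_mat m m" using AC RC by simp
  have Qv: "\<And>v. v \<in> carrier_vec m \<Longrightarrow> (W * P * adj W + R) *\<^sub>v v = W *\<^sub>v (P *\<^sub>v (adj W *\<^sub>v v)) + R *\<^sub>v v"
    using add_mult_distrib_mat_vec[OF AC RC] conjv[OF PC] by simp
  have WaQv: "\<And>v. v \<in> carrier_vec m \<Longrightarrow> adj W *\<^sub>v ((W * P * adj W + R) *\<^sub>v v) = P *\<^sub>v (adj W *\<^sub>v v)"
  proof -
    fix v :: "complex vec" assume v: "v \<in> carrier_vec m"
    have c1: "P *\<^sub>v (adj W *\<^sub>v v) \<in> carrier_vec n" using PC Wav[OF v] by simp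
    have "adj W *\<^sub>v ((W * P * adj W + R) *\<^sub>v v) = adj W *\<^sub>v (W *\<^sub>v (P *\<^sub>v (adj W *\<^sub>v v))) + adj W *\<^sub>v (R *\<^sub>v v)"
      using Qv[OF v] mult_add_distrib_mat_vec[OF WaC Wv[OF c1], of "R *\<^sub>v v"] RC v by simp
    then show "adj W *\<^sub>v ((W * P * adj W + R) *\<^sub>v v) = P *\<^sub>v (adj W *\<^sub>v v)"
      using WWv[OF c1] WaRv[OF v] c1 by simp
  qed
  have RQv: "\<And>v. v \<in> carrier_vec m \<Longrightarrow> R *\<^sub>v ((W * P * adj W + R) *\<^sub>v v) = R *\<^sub>v v"
  proof -
    fix v :: "complex vec" assume v: "v \<in> carrier_vec m"
    have qc: "(W * P * adj W + R) *\<^sub>v v \<in> carrier_vec m" using QC v by simp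
    have c1: "P *\<^sub>v (adj W *\<^sub>v v) \<in> carrier_vec n" using PC Wav[OF v] by simp
    have "R *\<^sub>v ((W * P * adj W + R) *\<^sub>v v) = (W * P * adj W + R) *\<^sub>v v - W *\<^sub>v (P *\<^sub>v (adj W *\<^sub>v v))"
      using Rv[OF qc] WaQv[OF v] by simp
    also have "\<dots> = R *\<^sub>v v" using Qv[OF v] vec_add_minus_cancel[OF Wv[OF c1], of "R *\<^sub>v v"] RC v
      by simp
    finally show "R *\<^sub>v ((W * P * adj W + R) *\<^sub>v v) = R *\<^sub>v v" .
  qed
  have QQ: "(W * P * adj W + R) * (W * P * adj W + R) = W * P * adj W + R"
  proof (rule mat_eq_by_vec[of _ m m])
    fix v :: "complex vec" assume v: "v \<in> carrier_vec m"
    have qc: "(W * P * adj W + R) *\<^sub>v v \<in> carrier_vec m" using QC v by simp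
    have "((W * P * adj W + R) * (W * P * adj W + R)) *\<^sub>v v = (W * P * adj W + R) *\<^sub>v ((W * P * adj W + R) *\<^sub>v v)"
      using assoc_mult_mat_vec[OF QC QC v] .
    also have "\<dots> = W *\<^sub>v (P *\<^sub>v (P *\<^sub>v (adj W *\<^sub>v v))) + R *\<^sub>v v"
      using Qv[OF qc] WaQv[OF v] RQv[OF v] by simp
    also have "\<dots> = (W * P * adj W + R) *\<^sub>v v" using PPv[OF Wav[OF v]] Qv[OF v] by simp
    finally show "((W * P * adj W + R) * (W * P * adj W + R)) *\<^sub>v v = (W * P * adj W + R) *\<^sub>v v" .
  qed (use QC in simp_all)
  have QA: "adj (W * P * adj W + R) = W * P * adj W + R"
    using adj_add[OF AC RC] adj_conj[OF PC] PA adj_R by simp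
  show "isproj m (W * P * adj W + R)" using QC QQ QA by (simp add: isproj_def)
  show "rng m (W * P * adj W + R) = {W *\<^sub>v u + z | u z. u \<in> rng n P \<and> z \<in> carrier_vec m \<and> adj W *\<^sub>v z = 0\<^sub>v n}"
  proof
    show "rng m (W * P * adj W + R) \<subseteq> {W *\<^sub>v u + z | u z. u \<in> rng n P \<and> z \<in> carrier_vec m \<and> adj W *\<^sub>v z = 0\<^sub>v n}"
    proof
      fix y assume "y \<in> rng m (W * P * adj W + R)"
      then obtain v where v: "v \<in> carrier_vec m" "y = (W * P * adj W + R) *\<^sub>v v" by (elim imageE)
      have "y = W *\<^sub>v (P *\<^sub>v (adj W *\<^sub>v v)) + R *\<^sub>v v" using v Qv by simp
      moreover have "P *\<^sub>v (adj W *\<^sub>v v) \<in> rng n P" by (rule imageI[OF Wav[OF v(1)]])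
      moreover have "R *\<^sub>v v \<in> carrier_vec m" using RC v by simp
      moreover have "adj W *\<^sub>v (R *\<^sub>v v) = 0\<^sub>v n" using WaRv[OF v(1)] .
      ultimately show "y \<in> {W *\<^sub>v u + z | u z. u \<in> rng n P \<and> z \<in> carrier_vec m \<and> adj W *\<^sub>v z = 0\<^sub>v n}"
        by blast
    qed
    show "{W *\<^sub>v u + z | u z. u \<in> rng n P \<and> z \<in> carrier_vec m \<and> adj W *\<^sub>v z = 0\<^sub>v n} \<subseteq> rng m (W * P * adj W + R)"
    proof
      fix y assume "y \<in> {W *\<^sub>v u + z | u z. u \<in> rng n P \<and> z \<in> carrier_vec m \<and> adj W *\<^sub>v z = 0\<^sub>v n}"
      then obtain u z where uz: "y = W *\<^sub>v u + z" "u \<in> rng n P" "z \<in> carrier_vec m" "adj W *\<^sub>v z = 0\<^sub>v n"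
        by blast
      have uc: "u \<in> carrier_vec n" using uz rng_carrier[OF P] by auto
      have yc: "y \<in> carrier_vec m" using uz Wv[OF uc] by simp
      have Way: "adj W *\<^sub>v y = u"
        using uz mult_add_distrib_mat_vec[OF WaC Wv[OF uc] uz(3)] WWv[OF uc] uc by simp
      have "(W * P * adj W + R) *\<^sub>v y = W *\<^sub>v (P *\<^sub>v u) + (y - W *\<^sub>v u)"
        using Qv[OF yc] Rv[OF yc] Way by simp
      also have "\<dots> = y" using proj_fix[OF P uz(2)] vec_add_minus_cancel2[OF Wv[OF uc] yc] by simp
      finally show "y \<in> rng m (W * P * adj W + R)" by (rule image_eqI[OF sym yc])
    qed
  qed
qed

end



lemma mult_zero_vec'[simp]: "A \<in> carrier_mat k n \<Longrightarrow> A *\<^sub>v 0\<^sub>v n = (0\<^sub>v k :: complex vec)"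
  by (rule eq_vecI) (auto simp: row_vec[of _ k n])

lemma eig_finite: assumes X: "X \<in> carrier_mat k k"
  shows "finite {l::real. eigenvalue X (complex_of_real l) \<and> l \<le> 0}"
proof -
  have "coeff (char_poly X) k = 1" using degree_monic_char_poly[OF X] by simp
  then have nz: "char_poly X \<noteq> 0" by auto
  have "{l::real. eigenvalue X (complex_of_real l) \<and> l \<le> 0} \<subseteq> complex_of_real -` {z. poly (char_poly X) z = 0}"
    using eigenvalue_root_char_poly[OF X] by auto
  moreover have "finite (complex_of_real -` {z. poly (char_poly X) z = 0})"
    by (rule finite_vimageI[OF poly_roots_finite[OF nz]]) (auto simp: inj_def)
  ultimately show ?thesis by (rule finite_subset)
qed

lemma tr_foldr: assumes "\<And>l. l \<in> set xs \<Longrightarrow> f l \<in> carrier_mat k k" "Y \<in> carrier_mat k k"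
  shows "foldr (\<lambda>l acc. f l + acc) xs (0\<^sub>m k k) \<in> carrier_mat k k \<and>
    tr (foldr (\<lambda>l acc. f l + acc) xs (0\<^sub>m k k) * Y) = sum_list (map (\<lambda>l. tr (f l * Y)) xs)"
  using assms(1)
proof (induct xs)
  case Nil then show ?case using assms(2) by simp
next
  case (Cons a xs)
  let ?F = "foldr (\<lambda>l acc. f l + acc) xs (0\<^sub>m k k)"
  have F: "?F \<in> carrier_mat k k" and IH: "tr (?F * Y) = sum_list (map (\<lambda>l. tr (f l * Y)) xs)" using Cons by auto
  have fa: "f a \<in> carrier_mat k k" using Cons by auto
  have "(f a + ?F) * Y = f a * Y + ?F * Y" by (rule add_mult_distrib_mat[OF fa F assms(2)])
  then have "tr ((f a + ?F) * Y) = tr (f a * Y) + tr (?F * Y)"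
    using tr_add[of "f a * Y" k "?F * Y"] fa F assms(2) by simp
  then show ?case using IH F fa by simp
qed

lemma tr_np: assumes X: "X \<in> carrier_mat k k" and Y: "Y \<in> carrier_mat k k"
  shows "tr (nonpos_proj X * Y) = (\<Sum>l\<in>{l::real. eigenvalue X (complex_of_real l) \<and> l \<le> 0}. tr (orth_proj k (eigspace X l) * Y))"
proof -
  let ?S = "{l::real. eigenvalue X (complex_of_real l) \<and> l \<le> 0}"
  have fin: "finite ?S" by (rule eig_finite[OF X])
  have C: "\<And>l. orth_proj k (eigspace X l) \<in> carrier_mat k k" using oproj_eig(1)[OF X] proj_carrier by blast
  have "tr (nonpos_proj X * Y) = sum_list (map (\<lambda>l. tr (orth_proj k (eigspace X l) * Y)) (sorted_list_of_set ?S))"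
    unfolding nonpos_proj_def using X tr_foldr[OF C Y, where xs="sorted_list_of_set ?S"] by simp
  also have "\<dots> = (\<Sum>l\<in>?S. tr (orth_proj k (eigspace X l) * Y))"
    using fin by (simp add: sum_list_distinct_conv_sum_set)
  finally show ?thesis .
qed

context iso begin

lemma eig_conj: assumes X: "X \<in> carrier_mat n n" and l: "l \<noteq> 0"
  shows "eigspace (W * X * adj W) l = (\<lambda>u. W *\<^sub>v u) ` eigspace X l"
proof
  let ?c = "complex_of_real l"
  have c0: "?c \<noteq> 0" using l by simp
  have d: "dim_row (W * X * adj W) = m" using WC by simp
  show "eigspace (W * X * adj W) l \<subseteq> (\<lambda>u. W *\<^sub>v u) ` eigspace X l"
  proof
    fix v assume "v \<in> eigspace (W * X * adj W) l"
    then have v: "v \<in> carrier_vec m" "(W * X * adj W) *\<^sub>v v = ?c \<cdot>\<^sub>v v" using d by (auto simp: eigspace_def)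
    define u where "u = adj W *\<^sub>v v"
    have uc: "u \<in> carrier_vec n" using Wav[OF v(1)] by (simp add: u_def)
    have Xuc: "X *\<^sub>v u \<in> carrier_vec n" using X uc by simp
    have e1: "W *\<^sub>v (X *\<^sub>v u) = ?c \<cdot>\<^sub>v v" using v conjv[OF X v(1)] by (simp add: u_def)
    have "v = (1 / ?c) \<cdot>\<^sub>v (?c \<cdot>\<^sub>v v)" using c0 by (simp add: smult_smult_assoc)
    also have "\<dots> = W *\<^sub>v ((1 / ?c) \<cdot>\<^sub>v (X *\<^sub>v u))" using e1 mult_mat_vec[OF WC Xuc] by simp
    finally have vW: "v = W *\<^sub>v ((1 / ?c) \<cdot>\<^sub>v (X *\<^sub>v u))" .
    have yc: "(1 / ?c) \<cdot>\<^sub>v (X *\<^sub>v u) \<in> carrier_vec n" using Xuc by simp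
    have "adj W *\<^sub>v v = adj W *\<^sub>v (W *\<^sub>v ((1 / ?c) \<cdot>\<^sub>v (X *\<^sub>v u)))" by (subst vW, rule refl)
    then have uy: "u = (1 / ?c) \<cdot>\<^sub>v (X *\<^sub>v u)" using WWv[OF yc] by (simp add: u_def)
    have vu: "v = W *\<^sub>v u" using vW uy by simp
    have "W *\<^sub>v (X *\<^sub>v u) = W *\<^sub>v (?c \<cdot>\<^sub>v u)" using e1 vu mult_mat_vec[OF WC uc] by simp
    then have "adj W *\<^sub>v (W *\<^sub>v (X *\<^sub>v u)) = adj W *\<^sub>v (W *\<^sub>v (?c \<cdot>\<^sub>v u))" by simp
    then have "X *\<^sub>v u = ?c \<cdot>\<^sub>v u" using WWv[OF Xuc] WWv[of "?c \<cdot>\<^sub>v u"] uc by simp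
    then have "u \<in> eigspace X l" using uc X by (simp add: eigspace_def)
    then show "v \<in> (\<lambda>u. W *\<^sub>v u) ` eigspace X l" using vu by (rule image_eqI[rotated])
  qed
  show "(\<lambda>u. W *\<^sub>v u) ` eigspace X l \<subseteq> eigspace (W * X * adj W) l"
  proof
    fix v assume "v \<in> (\<lambda>u. W *\<^sub>v u) ` eigspace X l"
    then obtain u where vu: "v = W *\<^sub>v u" and "u \<in> eigspace X l" by (rule imageE)
    then have u: "u \<in> carrier_vec n" "X *\<^sub>v u = ?c \<cdot>\<^sub>v u" using X by (auto simp: eigspace_def)
    have "(W * X * adj W) *\<^sub>v v = W *\<^sub>v (X *\<^sub>v u)" using conjv[OF X Wv[OF u(1)]] WWv[OF u(1)] vu by simp
    also have "\<dots> = ?c \<cdot>\<^sub>v v" using u mult_mat_vec[OF WC u(1)] vu by simp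
    finally show "v \<in> eigspace (W * X * adj W) l" using d vu Wv[OF u(1)] by (simp add: eigspace_def)
  qed
qed

lemma eig_conj0: assumes X: "X \<in> carrier_mat n n"
  shows "eigspace (W * X * adj W) 0 = {W *\<^sub>v u + z | u z. u \<in> eigspace X 0 \<and> z \<in> carrier_vec m \<and> adj W *\<^sub>v z = 0\<^sub>v n}"
proof
  have d: "dim_row (W * X * adj W) = m" using WC by simp
  show "eigspace (W * X * adj W) 0 \<subseteq> {W *\<^sub>v u + z | u z. u \<in> eigspace X 0 \<and> z \<in> carrier_vec m \<and> adj W *\<^sub>v z = 0\<^sub>v n}"
  proof
    fix v assume "v \<in> eigspace (W * X * adj W) 0"
    then have v: "v \<in> carrier_vec m" "(W * X * adj W) *\<^sub>v v = 0\<^sub>v m" using d by (auto simp: eigspace_def)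
    define u where "u = adj W *\<^sub>v v"
    have uc: "u \<in> carrier_vec n" using Wav[OF v(1)] by (simp add: u_def)
    have Xuc: "X *\<^sub>v u \<in> carrier_vec n" using X uc by simp
    have "W *\<^sub>v (X *\<^sub>v u) = 0\<^sub>v m" using v conjv[OF X v(1)] by (simp add: u_def)
    then have "adj W *\<^sub>v (W *\<^sub>v (X *\<^sub>v u)) = 0\<^sub>v n" using WaC by simp
    then have Xu: "X *\<^sub>v u = 0\<^sub>v n" using WWv[OF Xuc] by simp
    have ue: "u \<in> eigspace X 0" using uc X Xu by (simp add: eigspace_def)
    have zc: "R *\<^sub>v v \<in> carrier_vec m" using RC v by simp
    have "v = W *\<^sub>v u + R *\<^sub>v v" using Rv[OF v(1)] vec_add_minus_cancel2[OF Wv[OF uc] v(1)] by (simp add: u_def)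
    then show "v \<in> {W *\<^sub>v u + z | u z. u \<in> eigspace X 0 \<and> z \<in> carrier_vec m \<and> adj W *\<^sub>v z = 0\<^sub>v n}"
      using ue zc WaRv[OF v(1)] by blast
  qed
  show "{W *\<^sub>v u + z | u z. u \<in> eigspace X 0 \<and> z \<in> carrier_vec m \<and> adj W *\<^sub>v z = 0\<^sub>v n} \<subseteq> eigspace (W * X * adj W) 0"
  proof
    fix v assume "v \<in> {W *\<^sub>v u + z | u z. u \<in> eigspace X 0 \<and> z \<in> carrier_vec m \<and> adj W *\<^sub>v z = 0\<^sub>v n}"
    then obtain u z where uz: "v = W *\<^sub>v u + z" "u \<in> eigspace X 0" "z \<in> carrier_vec m" "adj W *\<^sub>v z = 0\<^sub>v n"
      by blast
    have u: "u \<in> carrier_vec n" "X *\<^sub>v u = 0\<^sub>v n" using uz X by (auto simp: eigspace_def)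
    have vc: "v \<in> carrier_vec m" using uz Wv[OF u(1)] by simp
    have "adj W *\<^sub>v v = u"
      using uz mult_add_distrib_mat_vec[OF WaC Wv[OF u(1)] uz(3)] WWv[OF u(1)] u by simp
    then have "(W * X * adj W) *\<^sub>v v = 0\<^sub>v m" using conjv[OF X vc] u WC by simp
    then show "v \<in> eigspace (W * X * adj W) 0" using d vc by (simp add: eigspace_def)
  qed
qed

lemma tr_conj: assumes P: "P \<in> carrier_mat n n" and Y: "Y \<in> carrier_mat n n"
  shows "tr ((W * P * adj W) * (W * Y * adj W)) = tr (P * Y)"
proof -
  have PY: "P * Y \<in> carrier_mat n n" using P Y by simp
  have "(W * P * adj W) * (W * Y * adj W) = W * (P * Y) * adj W"
  proof (rule mat_eq_by_vec[of _ m m])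
    fix v :: "complex vec" assume v: "v \<in> carrier_vec m"
    have c1: "Y *\<^sub>v (adj W *\<^sub>v v) \<in> carrier_vec n" using Y Wav[OF v] by simp
    have "((W * P * adj W) * (W * Y * adj W)) *\<^sub>v v = (W * P * adj W) *\<^sub>v ((W * Y * adj W) *\<^sub>v v)"
      using assoc_mult_mat_vec[OF conj_carrier[OF P] conj_carrier[OF Y] v] .
    also have "\<dots> = W *\<^sub>v (P *\<^sub>v (Y *\<^sub>v (adj W *\<^sub>v v)))"
      using conjv[OF Y v] conjv[OF P Wv[OF c1]] WWv[OF c1] by simp
    also have "\<dots> = (W * (P * Y) * adj W) *\<^sub>v v"
      using conjv[OF PY v] assoc_mult_mat_vec[OF P Y Wav[OF v]] by simp
    finally show "((W * P * adj W) * (W * Y * adj W)) *\<^sub>v v = (W * (P * Y) * adj W) *\<^sub>v v" .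
  qed (use conj_carrier[OF P] conj_carrier[OF PY] conj_carrier[OF Y] in simp_all)
  moreover have "tr (W * (P * Y) * adj W) = tr (adj W * (W * (P * Y)))"
    by (rule tr_comm[OF mult_carrier_mat[OF WC PY] WaC])
  moreover have "adj W * (W * (P * Y)) = P * Y"
    using assoc_mult_mat[OF WaC WC PY] WW left_mult_one_mat[OF PY] by simp
  ultimately show ?thesis by simp
qed

lemma tr_R: assumes Y: "Y \<in> carrier_mat n n"
  shows "tr (R * (W * Y * adj W)) = 0"
proof -
  have "R * (W * Y * adj W) = 0\<^sub>m m m"
  proof (rule mat_eq_by_vec[of _ m m])
    fix v :: "complex vec" assume v: "v \<in> carrier_vec m"
    have c1: "Y *\<^sub>v (adj W *\<^sub>v v) \<in> carrier_vec n" using Y Wav[OF v] by simp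
    have "(R * (W * Y * adj W)) *\<^sub>v v = R *\<^sub>v ((W * Y * adj W) *\<^sub>v v)"
      using assoc_mult_mat_vec[OF RC conj_carrier[OF Y] v] .
    also have "\<dots> = 0\<^sub>v m" using conjv[OF Y v] Rv[OF Wv[OF c1]] WWv[OF c1] Wv[OF c1] by simp
    finally show "(R * (W * Y * adj W)) *\<^sub>v v = 0\<^sub>m m m *\<^sub>v v" using v by simp
  qed (use RC conj_carrier[OF Y] in simp_all)
  then show ?thesis by simp
qed

lemma term_eq: assumes X: "X \<in> carrier_mat n n" and Y: "Y \<in> carrier_mat n n"
  shows "tr (orth_proj m (eigspace (W * X * adj W) l) * (W * Y * adj W)) = tr (orth_proj n (eigspace X l) * Y)"
proof -
  define P where "P = orth_proj n (eigspace X l)"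
  have P: "isproj n P" "rng n P = eigspace X l" using oproj_eig[OF X] by (auto simp: P_def)
  have PC: "P \<in> carrier_mat n n" using P proj_carrier by blast
  show ?thesis
  proof (cases "l = 0")
    case False
    have "orth_proj m (eigspace (W * X * adj W) l) = W * P * adj W"
      using orth_proj_eq[OF proj_conj(1)[OF P(1)]] proj_conj(2)[OF P(1)] P(2) eig_conj[OF X False] by simp
    then show ?thesis using tr_conj[OF PC Y] by (simp add: P_def)
  next
    case True
    have "orth_proj m (eigspace (W * X * adj W) l) = W * P * adj W + R"
      using orth_proj_eq[OF proj_conj0(1)[OF P(1)]] proj_conj0(2)[OF P(1)] P(2) eig_conj0[OF X] True by simp
    moreover have "(W * P * adj W + R) * (W * Y * adj W) = (W * P * adj W) * (W * Y * adj W) + R * (W * Y * adj W)"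
      by (rule add_mult_distrib_mat[OF conj_carrier[OF PC] RC conj_carrier[OF Y]])
    moreover have "tr ((W * P * adj W) * (W * Y * adj W) + R * (W * Y * adj W)) =
        tr ((W * P * adj W) * (W * Y * adj W)) + tr (R * (W * Y * adj W))"
      using tr_add[of _ m] conj_carrier[OF PC] RC conj_carrier[OF Y] by (meson mult_carrier_mat)
    ultimately show ?thesis using tr_conj[OF PC Y] tr_R[OF Y] by (simp add: P_def)
  qed
qed

lemma np_transfer: assumes X: "X \<in> carrier_mat n n" and Y: "Y \<in> carrier_mat n n"
  shows "tr (nonpos_proj (W * X * adj W) * (W * Y * adj W)) = tr (nonpos_proj X * Y)"
proof -
  let ?X' = "W * X * adj W" and ?Y' = "W * Y * adj W"
  let ?S = "{l::real. eigenvalue X (complex_of_real l) \<and> l \<le> 0}"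
  let ?S' = "{l::real. eigenvalue ?X' (complex_of_real l) \<and> l \<le> 0}"
  let ?T = "\<lambda>l. tr (orth_proj n (eigspace X l) * Y)"
  have X': "?X' \<in> carrier_mat m m" and Y': "?Y' \<in> carrier_mat m m" using conj_carrier X Y by auto
  have fS: "finite ?S" and fS': "finite ?S'" using eig_finite X X' by auto
  have z: "\<And>l. \<not> eigenvalue X (complex_of_real l) \<Longrightarrow> ?T l = 0"
    using oproj_noneig[OF X] Y by simp
  have z': "\<And>l. \<not> eigenvalue ?X' (complex_of_real l) \<Longrightarrow> ?T l = 0"
    using oproj_noneig[OF X'] Y' term_eq[OF X Y] by (metis left_mult_zero_mat tr_zero)
  have "tr (nonpos_proj ?X' * ?Y') = (\<Sum>l\<in>?S'. tr (orth_proj m (eigspace ?X' l) * ?Y'))"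
    by (rule tr_np[OF X' Y'])
  also have "\<dots> = (\<Sum>l\<in>?S'. ?T l)" using term_eq[OF X Y] by simp
  also have "\<dots> = (\<Sum>l\<in>?S \<union> ?S'. ?T l)"
    by (rule sum.mono_neutral_right[symmetric]) (use fS fS' z' in auto)
  also have "\<dots> = (\<Sum>l\<in>?S. ?T l)"
    by (rule sum.mono_neutral_right) (use fS fS' z in auto)
  also have "\<dots> = tr (nonpos_proj X * Y)" by (rule tr_np[OF X Y, symmetric])
  finally show ?thesis .
qed

end



lemma divmod_aux: "(j::nat) < m \<Longrightarrow> (i * m + j) div m = i \<and> (i * m + j) mod m = j"
  by auto

lemma idx_bound: "(i::nat) < k \<Longrightarrow> j < m \<Longrightarrow> i * m + j < k * m"
proof -
  assume "i < k" "j < m"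
  then have "i * m + j < i * m + m" by simp
  also have "\<dots> = Suc i * m" by simp
  also have "\<dots> \<le> k * m" using \<open>i < k\<close> by (intro mult_le_mono1) simp
  finally show ?thesis .
qed

lemma sum_if_const: "(\<Sum>p\<in>A. if c then G p else 0) = (if c then sum G A else (0::'a::comm_monoid_add))"
  by (cases c) simp_all

definition liftA :: "nat \<Rightarrow> complex mat \<Rightarrow> complex mat" where
  "liftA k W = mat (k * dim_row W) (k * dim_col W) (\<lambda>(x,r). if x div dim_row W = r div dim_col W
      then W $$ (x mod dim_row W, r mod dim_col W) else 0)"

lemma liftA_dims[simp]: "dim_row (liftA k W) = k * dim_row W" "dim_col (liftA k W) = k * dim_col W"
  by (auto simp: liftA_def)

lemma liftA_carrier: "W \<in> carrier_mat m n \<Longrightarrow> liftA k W \<in> carrier_mat (k*m) (k*n)"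
  by (auto simp: liftA_def)

lemma liftA_idx: assumes W: "W \<in> carrier_mat m n" and x: "x < k*m" and r: "r < k*n"
  shows "liftA k W $$ (x, r) = (if x div m = r div n then W $$ (x mod m, r mod n) else 0)"
  using assms by (auto simp: liftA_def)

lemma liftA_mult_left: assumes W: "W \<in> carrier_mat m n" and S: "S \<in> carrier_mat (k*n) N"
  and i: "i < k" and j: "j < m" and s: "s < N"
  shows "(liftA k W * S) $$ (i*m+j, s) = (\<Sum>p<n. W $$ (j,p) * S $$ (i*n+p, s))"
proof -
  have x: "i*m+j < k*m" by (rule idx_bound[OF i j])
  have "(liftA k W * S) $$ (i*m+j, s) = (\<Sum>r<k*n. liftA k W $$ (i*m+j, r) * S $$ (r, s))"
    by (rule mult_entry[OF liftA_carrier[OF W] S x s])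
  also have "\<dots> = (\<Sum>a<k. \<Sum>p<n. liftA k W $$ (i*m+j, a*n+p) * S $$ (a*n+p, s))"
    by (rule sum_split_mult)
  also have "\<dots> = (\<Sum>a<k. \<Sum>p<n. if i = a then W $$ (j,p) * S $$ (a*n+p, s) else 0)"
    using divmod_aux[OF j] divmod_aux x
    by (intro sum.cong refl) (simp add: liftA_idx[OF W x idx_bound])
  also have "\<dots> = (\<Sum>a<k. if i = a then (\<Sum>p<n. W $$ (j,p) * S $$ (a*n+p, s)) else 0)"
    by (simp add: sum_if_const)
  also have "\<dots> = (\<Sum>p<n. W $$ (j,p) * S $$ (i*n+p, s))" using i by (simp add: sum.delta)
  finally show ?thesis .
qed

lemma liftA_mult_right: assumes W: "W \<in> carrier_mat m n" and M: "M \<in> carrier_mat N (k*n)"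
  and x: "x < N" and i: "i < k" and j: "j < m"
  shows "(M * adj (liftA k W)) $$ (x, i*m+j) = (\<Sum>q<n. M $$ (x, i*n+q) * cnj (W $$ (j,q)))"
proof -
  have y: "i*m+j < k*m" by (rule idx_bound[OF i j])
  have UC: "adj (liftA k W) \<in> carrier_mat (k*n) (k*m)" using liftA_carrier[OF W] by simp
  have "(M * adj (liftA k W)) $$ (x, i*m+j) = (\<Sum>r<k*n. M $$ (x, r) * adj (liftA k W) $$ (r, i*m+j))"
    by (rule mult_entry[OF M UC x y])
  also have "\<dots> = (\<Sum>a<k. \<Sum>q<n. M $$ (x, a*n+q) * adj (liftA k W) $$ (a*n+q, i*m+j))"
    by (rule sum_split_mult)
  also have "\<dots> = (\<Sum>a<k. \<Sum>q<n. if i = a then M $$ (x, a*n+q) * cnj (W $$ (j,q)) else 0)"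
  proof (intro sum.cong refl)
    fix a q assume a: "a \<in> {..<k}" and q: "q \<in> {..<n}"
    have aq: "a*n+q < k*n" using a q idx_bound by auto
    have "adj (liftA k W) $$ (a*n+q, i*m+j) = cnj (liftA k W $$ (i*m+j, a*n+q))"
      using aq y W by simp
    then show "M $$ (x, a*n+q) * adj (liftA k W) $$ (a*n+q, i*m+j) = (if i = a then M $$ (x, a*n+q) * cnj (W $$ (j,q)) else 0)"
      using divmod_aux[OF j] divmod_aux q liftA_idx[OF W y aq] by auto
  qed
  also have "\<dots> = (\<Sum>a<k. if i = a then (\<Sum>q<n. M $$ (x, a*n+q) * cnj (W $$ (j,q))) else 0)"
    by (simp add: sum_if_const)
  also have "\<dots> = (\<Sum>q<n. M $$ (x, i*n+q) * cnj (W $$ (j,q)))" using i by (simp add: sum.delta)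
  finally show ?thesis .
qed

lemma ptrace_first_conj: assumes W: "W \<in> carrier_mat m n" and S: "S \<in> carrier_mat (k*n) (k*n)"
  shows "ptrace_first k m (liftA k W * S * adj (liftA k W)) = W * ptrace_first k n S * adj W"
proof (rule eq_matI)
  have US: "liftA k W * S \<in> carrier_mat (k*m) (k*n)" using liftA_carrier[OF W, of k] S by simp
  have PC: "ptrace_first k n S \<in> carrier_mat n n" by (simp add: ptrace_first_def)
  fix j j' assume "j < dim_row (W * ptrace_first k n S * adj W)" "j' < dim_col (W * ptrace_first k n S * adj W)"
  then have j: "j < m" and j': "j' < m" using W by auto
  have "ptrace_first k m (liftA k W * S * adj (liftA k W)) $$ (j,j') =
      (\<Sum>i<k. (liftA k W * S * adj (liftA k W)) $$ (i*m+j, i*m+j'))"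
    using j j' by (simp add: ptrace_first_def)
  also have "\<dots> = (\<Sum>i<k. \<Sum>q<n. (\<Sum>p<n. W $$ (j,p) * S $$ (i*n+p, i*n+q)) * cnj (W $$ (j',q)))"
  proof (intro sum.cong refl)
    fix i assume i: "i \<in> {..<k}"
    show "(liftA k W * S * adj (liftA k W)) $$ (i*m+j, i*m+j') =
        (\<Sum>q<n. (\<Sum>p<n. W $$ (j,p) * S $$ (i*n+p, i*n+q)) * cnj (W $$ (j',q)))"
      using liftA_mult_right[OF W US idx_bound[of i k j m] _ j'] i j
        liftA_mult_left[OF W S, of i j] idx_bound[of i k] by simp
  qed
  also have "\<dots> = (\<Sum>i<k. \<Sum>q<n. \<Sum>p<n. W $$ (j,p) * S $$ (i*n+p, i*n+q) * cnj (W $$ (j',q)))"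
    by (simp add: sum_distrib_right)
  also have "\<dots> = (\<Sum>q<n. \<Sum>i<k. \<Sum>p<n. W $$ (j,p) * S $$ (i*n+p, i*n+q) * cnj (W $$ (j',q)))"
    by (rule sum.swap)
  also have "\<dots> = (\<Sum>q<n. \<Sum>p<n. \<Sum>i<k. W $$ (j,p) * S $$ (i*n+p, i*n+q) * cnj (W $$ (j',q)))"
    by (rule sum.cong[OF refl]) (rule sum.swap)
  also have "\<dots> = (\<Sum>q<n. \<Sum>p<n. W $$ (j,p) * (\<Sum>i<k. S $$ (i*n+p, i*n+q)) * cnj (W $$ (j',q)))"
    by (simp add: sum_distrib_left sum_distrib_right)
  also have "\<dots> = (W * ptrace_first k n S * adj W) $$ (j,j')"
  proof -
    have WP: "W * ptrace_first k n S \<in> carrier_mat m n" using W PC by simp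
    have "(W * ptrace_first k n S * adj W) $$ (j,j') = (\<Sum>q<n. (W * ptrace_first k n S) $$ (j,q) * adj W $$ (q,j'))"
      by (rule mult_entry[OF WP adj_carrier[OF W] j j'])
    also have "\<dots> = (\<Sum>q<n. (\<Sum>p<n. W $$ (j,p) * ptrace_first k n S $$ (p,q)) * cnj (W $$ (j',q)))"
      using W j j' by (intro sum.cong refl) (simp add: mult_entry[OF W PC])
    also have "\<dots> = (\<Sum>q<n. \<Sum>p<n. W $$ (j,p) * (\<Sum>i<k. S $$ (i*n+p, i*n+q)) * cnj (W $$ (j',q)))"
      by (intro sum.cong refl) (simp add: ptrace_first_def sum_distrib_right)
    finally show ?thesis by simp
  qed
  finally show "ptrace_first k m (liftA k W * S * adj (liftA k W)) $$ (j,j') = (W * ptrace_first k n S * adj W) $$ (j,j')" .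
qed (use W in \<open>simp_all add: ptrace_first_def\<close>)

lemma liftA_iso: assumes W: "W \<in> carrier_mat m n" and WW: "adj W * W = 1\<^sub>m n"
  shows "adj (liftA k W) * liftA k W = 1\<^sub>m (k*n)"
proof (rule eq_matI)
  fix r s assume "r < dim_row (1\<^sub>m (k*n) :: complex mat)" "s < dim_col (1\<^sub>m (k*n) :: complex mat)"
  then have r: "r < k*n" and s: "s < k*n" by auto
  have n0: "n > 0" using r by (cases n) auto
  have rd: "r div n < k" and sd: "s div n < k" using r s by (auto simp: less_mult_imp_div_less)
  have rm: "r mod n < n" and sm: "s mod n < n" using n0 by auto
  have UC: "liftA k W \<in> carrier_mat (k*m) (k*n)" by (rule liftA_carrier[OF W])
  have "(adj (liftA k W) * liftA k W) $$ (r,s) = (\<Sum>x<k*m. adj (liftA k W) $$ (r,x) * liftA k W $$ (x,s))"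
    by (rule mult_entry[OF adj_carrier[OF UC] UC r s])
  also have "\<dots> = (\<Sum>i<k. \<Sum>j<m. adj (liftA k W) $$ (r,i*m+j) * liftA k W $$ (i*m+j,s))"
    by (rule sum_split_mult)
  also have "\<dots> = (\<Sum>i<k. if i = r div n then (\<Sum>j<m. cnj (W $$ (j, r mod n)) * (if i = s div n then W $$ (j, s mod n) else 0)) else 0)"
    unfolding sum_if_const[symmetric]
  proof (intro sum.cong refl)
    fix i j assume i: "i \<in> {..<k}" and j: "j \<in> {..<m}"
    have x: "i*m+j < k*m" using i j idx_bound by auto
    show "adj (liftA k W) $$ (r,i*m+j) * liftA k W $$ (i*m+j,s) =
      (if i = r div n then cnj (W $$ (j, r mod n)) * (if i = s div n then W $$ (j, s mod n) else 0) else 0)"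
      using x r s W UC liftA_idx[OF W x r] liftA_idx[OF W x s] divmod_aux[of j m i] j by auto
  qed
  also have "\<dots> = (\<Sum>j<m. cnj (W $$ (j, r mod n)) * (if r div n = s div n then W $$ (j, s mod n) else 0))"
    using rd by (simp add: sum.delta)
  also have "\<dots> = (if r div n = s div n then (adj W * W) $$ (r mod n, s mod n) else 0)"
    using W rm sm by (simp add: row_col[OF adj_carrier[OF W] W])
  also have "\<dots> = (if r = s then 1 else 0)"
  proof -
    have eq: "(r div n = s div n \<and> r mod n = s mod n) = (r = s)" by (metis div_mult_mod_eq)
    show ?thesis using WW rm sm eq by auto
  qed
  also have "\<dots> = (1\<^sub>m (k*n) :: complex mat) $$ (r,s)" using r s by simp
  finally show "(adj (liftA k W) * liftA k W) $$ (r,s) = (1\<^sub>m (k*n) :: complex mat) $$ (r,s)" .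
qed (use W in \<open>simp_all add: liftA_def\<close>)



lemma smult_mat_mult_vec': "M \<in> carrier_mat a b \<Longrightarrow> v \<in> carrier_vec b \<Longrightarrow> (c \<cdot>\<^sub>m M) *\<^sub>v v = (c::complex) \<cdot>\<^sub>v (M *\<^sub>v v)"
  by (rule eq_vecI) (auto simp: row_vec[of _ a b] sum_distrib_left mult.assoc)

lemma minus_smult_carrier[simp]: "A \<in> carrier_mat a b \<Longrightarrow> B \<in> carrier_mat a b \<Longrightarrow> A - c \<cdot>\<^sub>m B \<in> carrier_mat a b"
  unfolding carrier_mat_def by simp

context iso begin

lemma conj_mult: assumes A: "A \<in> carrier_mat n n" and B: "B \<in> carrier_mat n n"
  shows "(W * A * adj W) * (W * B * adj W) = W * (A * B) * adj W"
proof (rule mat_eq_by_vec[of _ m m])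
  have AB: "A * B \<in> carrier_mat n n" using A B by simp
  fix v :: "complex vec" assume v: "v \<in> carrier_vec m"
  have c1: "B *\<^sub>v (adj W *\<^sub>v v) \<in> carrier_vec n" using B Wav[OF v] by simp
  have "((W * A * adj W) * (W * B * adj W)) *\<^sub>v v = (W * A * adj W) *\<^sub>v ((W * B * adj W) *\<^sub>v v)"
    using assoc_mult_mat_vec[OF conj_carrier[OF A] conj_carrier[OF B] v] .
  also have "\<dots> = W *\<^sub>v (A *\<^sub>v (B *\<^sub>v (adj W *\<^sub>v v)))"
    using conjv[OF B v] conjv[OF A Wv[OF c1]] WWv[OF c1] by simp
  also have "\<dots> = (W * (A * B) * adj W) *\<^sub>v v"
    using conjv[OF AB v] assoc_mult_mat_vec[OF A B Wav[OF v]] by simp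
  finally show "((W * A * adj W) * (W * B * adj W)) *\<^sub>v v = (W * (A * B) * adj W) *\<^sub>v v" .
qed (use conj_carrier[OF A] conj_carrier[OF B] A B conj_carrier[of "A * B"] in simp_all)

lemma conj_lin: assumes A: "A \<in> carrier_mat n n" and B: "B \<in> carrier_mat n n"
  shows "W * A * adj W - c \<cdot>\<^sub>m (W * B * adj W) = W * (A - c \<cdot>\<^sub>m B) * adj W"
proof (rule mat_eq_by_vec[of _ m m])
  have AB: "A - c \<cdot>\<^sub>m B \<in> carrier_mat n n" using A B by simp
  have cB: "c \<cdot>\<^sub>m (W * B * adj W) \<in> carrier_mat m m" using conj_carrier[OF B] by simp
  fix v :: "complex vec" assume v: "v \<in> carrier_vec m"
  have wv: "adj W *\<^sub>v v \<in> carrier_vec n" using Wav[OF v] .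
  have "(W * A * adj W - c \<cdot>\<^sub>m (W * B * adj W)) *\<^sub>v v = (W * A * adj W) *\<^sub>v v - (c \<cdot>\<^sub>m (W * B * adj W)) *\<^sub>v v"
    by (rule minus_mult_distrib_mat_vec[OF conj_carrier[OF A] cB v])
  also have "\<dots> = W *\<^sub>v (A *\<^sub>v (adj W *\<^sub>v v)) - c \<cdot>\<^sub>v (W *\<^sub>v (B *\<^sub>v (adj W *\<^sub>v v)))"
    using conjv[OF A v] conjv[OF B v] smult_mat_mult_vec'[OF conj_carrier[OF B] v] by simp
  also have "\<dots> = W *\<^sub>v (A *\<^sub>v (adj W *\<^sub>v v) - c \<cdot>\<^sub>v (B *\<^sub>v (adj W *\<^sub>v v)))"
    using mult_minus_distrib_mat_vec[OF WC, of "A *\<^sub>v (adj W *\<^sub>v v)" "c \<cdot>\<^sub>v (B *\<^sub>v (adj W *\<^sub>v v))"]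
      mult_mat_vec[OF WC, of "B *\<^sub>v (adj W *\<^sub>v v)" c] A B wv by simp
  also have "\<dots> = W *\<^sub>v ((A - c \<cdot>\<^sub>m B) *\<^sub>v (adj W *\<^sub>v v))"
    using minus_mult_distrib_mat_vec[OF A _ wv, of "c \<cdot>\<^sub>m B"] smult_mat_mult_vec'[OF B wv] B by simp
  also have "\<dots> = (W * (A - c \<cdot>\<^sub>m B) * adj W) *\<^sub>v v" using conjv[OF AB v] by simp
  finally show "(W * A * adj W - c \<cdot>\<^sub>m (W * B * adj W)) *\<^sub>v v = (W * (A - c \<cdot>\<^sub>m B) * adj W) *\<^sub>v v" .
qed (use conj_carrier[OF A] conj_carrier[OF B] conj_carrier[of "A - c \<cdot>\<^sub>m B"] A B in simp_all)

end

lemma R_eps_iso: assumes W: "W \<in> carrier_mat m n" and WW: "adj W * W = 1\<^sub>m n"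
  and S: "S \<in> carrier_mat (k*n) (k*n)"
  shows "R_eps k m \<epsilon> (liftA k W * S * adj (liftA k W)) = R_eps k n \<epsilon> S"
proof -
  interpret w: iso W m n using W WW by (unfold_locales)
  interpret u: iso "liftA k W" "k*m" "k*n" using liftA_carrier[OF W] liftA_iso[OF W WW] by (unfold_locales)
  let ?U = "liftA k W"
  let ?S' = "?U * S * adj ?U"
  define rB where "rB = ptrace_first k n S"
  define r2 where "r2 = ptrace_first k n (S * S)"
  have rBC: "rB \<in> carrier_mat n n" and r2C: "r2 \<in> carrier_mat n n" by (auto simp: rB_def r2_def ptrace_first_def)
  have SS: "S * S \<in> carrier_mat (k*n) (k*n)" using S by simp
  have e1: "ptrace_first k m ?S' = W * rB * adj W" unfolding rB_def by (rule ptrace_first_conj[OF W S])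
  have "?S' * ?S' = ?U * (S * S) * adj ?U" by (rule u.conj_mult[OF S S])
  then have e2: "ptrace_first k m (?S' * ?S') = W * r2 * adj W"
    unfolding r2_def using ptrace_first_conj[OF W SS] by simp
  have e3: "(W * rB * adj W) * (W * rB * adj W) = W * (rB * rB) * adj W" by (rule w.conj_mult[OF rBC rBC])
  have key: "\<And>c. tr (nonpos_proj (ptrace_first k m (?S' * ?S') - c \<cdot>\<^sub>m (ptrace_first k m ?S' * ptrace_first k m ?S')) * ptrace_first k m ?S')
      = tr (nonpos_proj (r2 - c \<cdot>\<^sub>m (rB * rB)) * rB)"
  proof -
    fix c
    have rr: "rB * rB \<in> carrier_mat n n" using rBC by simp
    have "ptrace_first k m (?S' * ?S') - c \<cdot>\<^sub>m (ptrace_first k m ?S' * ptrace_first k m ?S') = W * (r2 - c \<cdot>\<^sub>m (rB * rB)) * adj W"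
      using e1 e2 e3 w.conj_lin[OF r2C rr] by simp
    then show "tr (nonpos_proj (ptrace_first k m (?S' * ?S') - c \<cdot>\<^sub>m (ptrace_first k m ?S' * ptrace_first k m ?S')) * ptrace_first k m ?S')
      = tr (nonpos_proj (r2 - c \<cdot>\<^sub>m (rB * rB)) * rB)"
      using e1 w.np_transfer[of "r2 - c \<cdot>\<^sub>m (rB * rB)" rB] r2C rBC rr by simp
  qed
  show ?thesis unfolding R_eps_def Let_def key rB_def[symmetric] r2_def[symmetric] ..
qed



definition qf :: "nat \<Rightarrow> complex mat \<Rightarrow> (nat \<Rightarrow> complex) \<Rightarrow> complex" where
  "qf N J f = (\<Sum>i<N. \<Sum>l<N. cnj (f i) * J $$ (i,l) * f l)"

lemma qf_psd: assumes "psd N J" shows "0 \<le> Re (qf N J f)"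
proof -
  have J: "J \<in> carrier_mat N N" using assms by (simp add: psd_def)
  let ?v = "vec N f"
  have v: "?v \<in> carrier_vec N" by simp
  have "conjugate ?v \<bullet> (J *\<^sub>v ?v) = (\<Sum>i<N. cnj (f i) * (\<Sum>l<N. J $$ (i,l) * f l))"
    using J by (simp add: cip_sum[of _ N] row_vec[of _ N N])
  also have "\<dots> = qf N J f" by (simp add: qf_def sum_distrib_left mult.assoc)
  moreover have "0 \<le> Re (conjugate ?v \<bullet> (J *\<^sub>v ?v))" using assms v unfolding psd_def by blast
  ultimately show ?thesis by simp
qed

lemma qf_shift: assumes k: "k < N"
  shows "qf N J (\<lambda>i. f i - (if i = k then t else 0)) =
    qf N J f - t * (\<Sum>i<N. cnj (f i) * J $$ (i,k)) - cnj t * (\<Sum>l<N. J $$ (k,l) * f l) + cnj t * t * J $$ (k,k)"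
proof -
  have e: "\<And>i l. cnj (f i - (if i = k then t else 0)) * J $$ (i,l) * (f l - (if l = k then t else 0)) =
     cnj (f i) * J $$ (i,l) * f l - (if l = k then t * (cnj (f i) * J $$ (i,k)) else 0)
     - (if i = k then cnj t * (J $$ (k,l) * f l) else 0) + (if i = k then (if l = k then cnj t * t * J $$ (k,k) else 0) else 0)"
    by (auto simp: algebra_simps)
  have "qf N J (\<lambda>i. f i - (if i = k then t else 0)) =
     (\<Sum>i<N. (\<Sum>l<N. cnj (f i) * J $$ (i,l) * f l) - t * (cnj (f i) * J $$ (i,k))
        - (if i = k then cnj t * (\<Sum>l<N. J $$ (k,l) * f l) else 0) + (if i = k then cnj t * t * J $$ (k,k) else 0))"
    unfolding qf_def e using k
    by (intro sum.cong refl, simp only: sum.distrib sum_subtractf) (simp add: sum_if_const sum.delta sum_distrib_left)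
  also have "\<dots> = qf N J f - t * (\<Sum>i<N. cnj (f i) * J $$ (i,k)) - cnj t * (\<Sum>l<N. J $$ (k,l) * f l) + cnj t * t * J $$ (k,k)"
    using k by (simp add: qf_def sum.distrib sum_subtractf sum_distrib_left sum.delta)
  finally show ?thesis .
qed

lemma delta_mult1: "(if i = j then (1::complex) else 0) * x = (if i = j then x else 0)" by simp
lemma delta_mult2: "x * (if i = j then (1::complex) else 0) = (if i = j then x else 0)" by simp
lemma cnj_delta: "cnj (if i = j then (1::complex) else 0) = (if i = j then 1 else 0)" by simp

lemma psd_C: "psd N J \<Longrightarrow> J \<in> carrier_mat N N" by (simp add: psd_def)

lemma psd_herm: assumes "psd N J" "i < N" "j < N" shows "cnj (J $$ (j,i)) = J $$ (i,j)"
proof -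
  have "adj J = J" "J \<in> carrier_mat N N" using assms by (auto simp: psd_def hermitian_def)
  then show ?thesis using assms adj_index[of i J j] by (metis carrier_matD)
qed

lemma psd_diag: assumes "psd N J" "k < N"
  shows "J $$ (k,k) = complex_of_real (Re (J $$ (k,k)))" "0 \<le> Re (J $$ (k,k))"
proof -
  have "cnj (J $$ (k,k)) = J $$ (k,k)" using psd_herm[OF assms(1) assms(2) assms(2)] .
  then have "Im (J $$ (k,k)) = 0" by (metis cnj.simps(2) neg_equal_zero)
  then show "J $$ (k,k) = complex_of_real (Re (J $$ (k,k)))" by (simp add: complex_eq_iff)
  have "qf N J (\<lambda>i. 0 - (if i = k then -1 else 0)) = J $$ (k,k)"
    using qf_shift[OF assms(2), of J "\<lambda>i. 0" "-1"] by (simp add: qf_def)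
  then show "0 \<le> Re (J $$ (k,k))" using qf_psd[OF assms(1)] by metis
qed

lemma psd_zero_row: assumes J: "psd N J" and k: "k < N" and a: "J $$ (k,k) = 0" and j: "j < N"
  shows "J $$ (k,j) = 0"
proof (rule ccontr)
  assume nz: "J $$ (k,j) \<noteq> 0"
  then have jk: "j \<noteq> k" using a by auto
  define b where "b = J $$ (j,k)"
  have bk: "J $$ (k,j) = cnj b" using psd_herm[OF J k j] by (simp add: b_def)
  have b0: "b \<noteq> 0" using nz bk by auto
  define nb where "nb = Re (cnj b * b)"
  have "Re b \<noteq> 0 \<or> Im b \<noteq> 0" using b0 complex_eq_iff by auto
  then have nbp: "nb > 0" unfolding nb_def using sum_power2_gt_zero_iff[of "Re b" "Im b"] by (simp add: power2_eq_square)
  define r where "r = (Re (J $$ (j,j)) + 1) / (2 * nb)"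
  define t where "t = complex_of_real r * cnj b"
  let ?f = "\<lambda>i. if i = j then (1::complex) else 0"
  have "qf N J (\<lambda>i. ?f i - (if i = k then t else 0)) =
      qf N J ?f - t * (\<Sum>i<N. cnj (?f i) * J $$ (i,k)) - cnj t * (\<Sum>l<N. J $$ (k,l) * ?f l) + cnj t * t * J $$ (k,k)"
    by (rule qf_shift[OF k])
  also have "\<dots> = J $$ (j,j) - t * b - cnj t * cnj b"
    using j a bk by (simp add: qf_def b_def cnj_delta delta_mult1 delta_mult2 sum.delta)
  also have "\<dots> = J $$ (j,j) - complex_of_real (2 * r * nb)"
  proof -
    have cb: "cnj b * b = complex_of_real nb" unfolding nb_def by (simp add: complex_eq_iff)
    have "t * b + cnj t * cnj b = 2 * complex_of_real r * (cnj b * b)" by (simp add: t_def algebra_simps)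
    then have "t * b + cnj t * cnj b = complex_of_real (2 * r * nb)" using cb by simp
    then show ?thesis by (simp add: algebra_simps)
  qed
  finally have "Re (qf N J (\<lambda>i. ?f i - (if i = k then t else 0))) = Re (J $$ (j,j)) - 2 * r * nb"
    by simp
  also have "\<dots> = -1" using nbp by (simp add: r_def field_simps)
  finally show False using qf_psd[OF J, of "\<lambda>i. ?f i - (if i = k then t else 0)"] by simp
qed

lemma schur_psd: assumes J: "psd N J" and k: "k < N" and a: "J $$ (k,k) \<noteq> 0"
  shows "psd N (mat N N (\<lambda>(i,j). J $$ (i,j) - J $$ (i,k) * J $$ (k,j) / J $$ (k,k)))"
proof -
  let ?a = "J $$ (k,k)"
  let ?J' = "mat N N (\<lambda>(i,j). J $$ (i,j) - J $$ (i,k) * J $$ (k,j) / ?a)"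
  have JC: "J \<in> carrier_mat N N" using psd_C[OF J] .
  have ca: "cnj ?a = ?a" using psd_herm[OF J k k] .
  have H: "adj ?J' = ?J'"
  proof (rule eq_matI)
    fix i j assume "i < dim_row ?J'" "j < dim_col ?J'"
    then have ij: "i < N" "j < N" by auto
    show "adj ?J' $$ (i,j) = ?J' $$ (i,j)"
      using ij psd_herm[OF J ij] psd_herm[OF J ij(1) k] psd_herm[OF J k ij(2)] ca
      by (simp add: mult.commute)
  qed auto
  have Q: "\<And>v. v \<in> carrier_vec N \<Longrightarrow> 0 \<le> Re (conjugate v \<bullet> (?J' *\<^sub>v v))"
  proof -
    fix v :: "complex vec" assume v: "v \<in> carrier_vec N"
    define s where "s = (\<Sum>l<N. J $$ (k,l) * v $ l)"
    have A: "(\<Sum>i<N. cnj (v $ i) * J $$ (i,k)) = cnj s"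
      unfolding s_def cnj_sum using psd_herm[OF J _ k] by (intro sum.cong refl) (simp add: mult.commute)
    have J'C: "?J' \<in> carrier_mat N N" by simp
    have "conjugate v \<bullet> (?J' *\<^sub>v v) = (\<Sum>i<N. cnj (v $ i) * (?J' *\<^sub>v v) $ i)"
      by (rule cip_sum[OF v mult_mat_vec_carrier[OF J'C v]])
    also have "\<dots> = (\<Sum>i<N. cnj (v $ i) * (\<Sum>l<N. ?J' $$ (i,l) * v $ l))"
      by (intro sum.cong refl) (simp only: mult_vec_entry[OF J'C v] lessThan_iff)
    also have "\<dots> = (\<Sum>i<N. \<Sum>l<N. cnj (v $ i) * J $$ (i,l) * v $ l - (cnj (v $ i) * J $$ (i,k)) * (J $$ (k,l) * v $ l) / ?a)"
      by (intro sum.cong refl) (simp add: sum_distrib_left algebra_simps)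
    also have "\<dots> = (\<Sum>i<N. \<Sum>l<N. cnj (v $ i) * J $$ (i,l) * v $ l) - (\<Sum>i<N. \<Sum>l<N. (cnj (v $ i) * J $$ (i,k)) * (J $$ (k,l) * v $ l) / ?a)"
      by (simp only: sum_subtractf)
    also have P: "(\<Sum>i<N. \<Sum>l<N. (cnj (v $ i) * J $$ (i,k)) * (J $$ (k,l) * v $ l) / ?a) = cnj s * s / ?a"
    proof -
      have "cnj s * s / ?a = (\<Sum>i<N. cnj (v $ i) * J $$ (i,k)) * (\<Sum>l<N. J $$ (k,l) * v $ l) / ?a"
        using A by (simp add: s_def)
      also have "\<dots> = (\<Sum>i<N. \<Sum>l<N. (cnj (v $ i) * J $$ (i,k)) * (J $$ (k,l) * v $ l) / ?a)"
        by (simp only: sum_product sum_divide_distrib)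
      finally show ?thesis by simp
    qed
    also have "(\<Sum>i<N. \<Sum>l<N. cnj (v $ i) * J $$ (i,l) * v $ l) - cnj s * s / ?a = qf N J (\<lambda>i. v $ i) - cnj s * s / ?a"
      by (simp add: qf_def)
    also have "\<dots> = qf N J (\<lambda>i. v $ i - (if i = k then s / ?a else 0))"
    proof -
      have e: "qf N J (\<lambda>i. v $ i - (if i = k then s / ?a else 0)) =
          qf N J (\<lambda>i. v $ i) - s / ?a * cnj s - cnj (s / ?a) * s + cnj (s / ?a) * (s / ?a) * ?a"
        using qf_shift[OF k, of J "\<lambda>i. v $ i" "s / ?a"] unfolding A s_def[symmetric] .
      have h: "cnj (s / ?a) = cnj s / ?a" using ca by simp
      have h1: "s / ?a * cnj s = cnj s * s / ?a" by simp
      have h2: "cnj s / ?a * s = cnj s * s / ?a" by simp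
      have h3: "cnj s / ?a * (s / ?a) * ?a = cnj s * s / ?a" using a by (simp add: field_simps)
      show ?thesis unfolding e h h1 h2 h3 by simp
    qed
    finally show "0 \<le> Re (conjugate v \<bullet> (?J' *\<^sub>v v))" using qf_psd[OF J] by simp
  qed
  show ?thesis using H Q by (simp add: psd_def hermitian_def)
qed



lemma chol_aux: "psd N J \<Longrightarrow> (\<forall>i j. i < N \<longrightarrow> j < N \<longrightarrow> (i < k \<or> j < k) \<longrightarrow> J $$ (i,j) = 0) \<Longrightarrow>
  \<exists>e M. M \<in> carrier_mat N e \<and> J = M * adj M"
proof (induct "N - k" arbitrary: k J)
  case 0
  have JC: "J \<in> carrier_mat N N" using psd_C[OF 0(2)] .
  have "J = 0\<^sub>m N 0 * adj (0\<^sub>m N 0)"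
  proof (rule eq_matI)
    fix i j assume "i < dim_row (0\<^sub>m N 0 * adj (0\<^sub>m N 0 :: complex mat))" "j < dim_col (0\<^sub>m N 0 * adj (0\<^sub>m N 0 :: complex mat))"
    then have ij: "i < N" "j < N" by auto
    then have "J $$ (i,j) = 0" using 0 by auto
    then show "J $$ (i,j) = (0\<^sub>m N 0 * adj (0\<^sub>m N 0)) $$ (i,j)" using ij by (simp add: scalar_prod_def)
  qed (use JC in auto)
  then have "0\<^sub>m N 0 \<in> carrier_mat N 0 \<and> J = 0\<^sub>m N 0 * adj (0\<^sub>m N 0)" by simp
  then show ?case by blast
next
  case (Suc d)
  have kN: "k < N" using Suc(2) by simp
  have d: "d = N - Suc k" using Suc(2) by simp
  have J: "psd N J" using Suc(3) .
  have JC: "J \<in> carrier_mat N N" using psd_C[OF J] .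
  have Z: "\<And>i j. i < N \<Longrightarrow> j < N \<Longrightarrow> i < k \<or> j < k \<Longrightarrow> J $$ (i,j) = 0" using Suc(4) by blast
  let ?a = "J $$ (k,k)"
  show ?case
  proof (cases "?a = 0")
    case True
    have r: "\<And>j. j < N \<Longrightarrow> J $$ (k,j) = 0" using psd_zero_row[OF J kN True] .
    have c: "\<And>j. j < N \<Longrightarrow> J $$ (j,k) = 0" using r psd_herm[OF J _ kN] by (metis complex_cnj_zero)
    have "\<forall>i j. i < N \<longrightarrow> j < N \<longrightarrow> (i < Suc k \<or> j < Suc k) \<longrightarrow> J $$ (i,j) = 0"
      using Z r c by (metis less_Suc_eq)
    then show ?thesis using Suc(1)[OF d J] by blast
  next
    case False
    let ?J' = "mat N N (\<lambda>(i,j). J $$ (i,j) - J $$ (i,k) * J $$ (k,j) / ?a)"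
    have J': "psd N ?J'" by (rule schur_psd[OF J kN False])
    have "\<forall>i j. i < N \<longrightarrow> j < N \<longrightarrow> (i < Suc k \<or> j < Suc k) \<longrightarrow> ?J' $$ (i,j) = 0"
    proof (intro allI impI)
      fix i j assume ij: "i < N" "j < N" "i < Suc k \<or> j < Suc k"
      show "?J' $$ (i,j) = 0"
      proof (cases "i < k \<or> j < k")
        case True
        then show ?thesis using ij Z[OF ij(1,2)] Z[OF ij(1) kN] Z[OF kN ij(2)] by auto
      next
        case F: False
        then have "i = k \<or> j = k" using ij by auto
        then show ?thesis using ij False by auto
      qed
    qed
    then obtain e M' where M': "M' \<in> carrier_mat N e" "?J' = M' * adj M'" using Suc(1)[OF d J'] by blast
    have ar: "?a = complex_of_real (Re ?a)" and ap: "0 \<le> Re ?a" using psd_diag[OF J kN] by auto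
    define sq where "sq = complex_of_real (sqrt (Re ?a))"
    have "sq * sq = complex_of_real (Re ?a)" unfolding sq_def using ap
      by (simp flip: of_real_mult)
    then have sqsq: "sq * sq = ?a" using ar by (rule trans[OF _ sym])
    have sq0: "sq \<noteq> 0" using sqsq False by auto
    have csq: "cnj sq = sq" by (simp add: sq_def)
    define M where "M = mat N (Suc e) (\<lambda>(i,l). if l < e then M' $$ (i,l) else J $$ (i,k) / sq)"
    have MC: "M \<in> carrier_mat N (Suc e)" by (simp add: M_def)
    have "J = M * adj M"
    proof (rule eq_matI)
      fix i j assume "i < dim_row (M * adj M)" "j < dim_col (M * adj M)"
      then have ij: "i < N" "j < N" using MC by auto
      have "(M * adj M) $$ (i,j) = (\<Sum>l<Suc e. M $$ (i,l) * adj M $$ (l,j))"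
        by (rule mult_entry[OF MC adj_carrier[OF MC] ij])
      also have "\<dots> = (\<Sum>l<e. M' $$ (i,l) * cnj (M' $$ (j,l))) + J $$ (i,k) / sq * cnj (J $$ (j,k) / sq)"
        using ij MC by (simp add: M_def)
      also have "(\<Sum>l<e. M' $$ (i,l) * cnj (M' $$ (j,l))) = ?J' $$ (i,j)"
        using M' ij by (simp add: row_col[OF M'(1) adj_carrier[OF M'(1)]])
      also have "J $$ (i,k) / sq * cnj (J $$ (j,k) / sq) = J $$ (i,k) * J $$ (k,j) / ?a"
        using psd_herm[OF J kN ij(2)] csq sqsq by (simp add: field_simps)
      finally show "J $$ (i,j) = (M * adj M) $$ (i,j)" using ij by simp
    qed (use MC JC in auto)
    then show ?thesis using MC by blast
  qed
qed

lemma chol: "psd N J \<Longrightarrow> \<exists>e M. M \<in> carrier_mat N e \<and> J = M * adj M"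
  using chol_aux[of N J 0] by simp



lemma conj_entry: assumes A: "A \<in> carrier_mat a c" and X: "X \<in> carrier_mat c c" and x: "x < a" and y: "y < a"
  shows "(A * X * adj A) $$ (x,y) = (\<Sum>i<c. \<Sum>j<c. A $$ (x,i) * X $$ (i,j) * cnj (A $$ (y,j)))"
proof -
  have AX: "A * X \<in> carrier_mat a c" using A X by simp
  have "(A * X * adj A) $$ (x,y) = (\<Sum>j<c. (A * X) $$ (x,j) * adj A $$ (j,y))"
    by (rule mult_entry[OF AX adj_carrier[OF A] x y])
  also have "\<dots> = (\<Sum>j<c. (\<Sum>i<c. A $$ (x,i) * X $$ (i,j)) * cnj (A $$ (y,j)))"
    using A X x y by (intro sum.cong refl) (simp add: row_col[OF A X])
  also have "\<dots> = (\<Sum>i<c. \<Sum>j<c. A $$ (x,i) * X $$ (i,j) * cnj (A $$ (y,j)))"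
    by (simp add: sum_distrib_right) (rule sum.swap)
  finally show ?thesis .
qed

definition Emat :: "nat \<Rightarrow> nat \<Rightarrow> nat \<Rightarrow> complex mat" where
  "Emat b i j = mat b b (\<lambda>(k,l). if k = i \<and> l = j then 1 else 0)"

lemma cptp_lin: assumes F: "cptp b b' F" and X: "X \<in> carrier_mat b b" and p: "p < b'" and q: "q < b'"
  shows "F X $$ (p,q) = (\<Sum>i<b. \<Sum>j<b. X $$ (i,j) * F (Emat b i j) $$ (p,q))"
proof -
  have FC: "\<And>Y. Y \<in> carrier_mat b b \<Longrightarrow> F Y \<in> carrier_mat b' b'" using F by (simp add: cptp_def)
  have Fadd: "\<And>Y Z. Y \<in> carrier_mat b b \<Longrightarrow> Z \<in> carrier_mat b b \<Longrightarrow> F (Y + Z) = F Y + F Z" using F by (simp add: cptp_def)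
  have Fsm: "\<And>Y c. Y \<in> carrier_mat b b \<Longrightarrow> F (c \<cdot>\<^sub>m Y) = c \<cdot>\<^sub>m F Y" using F by (simp add: cptp_def)
  define XT where "XT T = mat b b (\<lambda>(k,l). if (k,l) \<in> T then X $$ (k,l) else 0)" for T
  have XTC: "\<And>T. XT T \<in> carrier_mat b b" by (simp add: XT_def)
  have EC: "\<And>i j. Emat b i j \<in> carrier_mat b b" by (simp add: Emat_def)
  have main: "finite T \<Longrightarrow> F (XT T) $$ (p,q) = (\<Sum>(i,j)\<in>T. X $$ (i,j) * F (Emat b i j) $$ (p,q))" for T
  proof (induct T rule: finite_induct)
    case empty
    have "XT {} = 0 \<cdot>\<^sub>m XT {}" by (rule eq_matI) (auto simp: XT_def)
    then have "F (XT {}) = 0 \<cdot>\<^sub>m F (XT {})" using Fsm[OF XTC] by metis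
    then have "F (XT {}) $$ (p,q) = 0 * F (XT {}) $$ (p,q)" using FC[OF XTC] p q
      by (metis carrier_matD index_smult_mat(1))
    then show ?case by simp
  next
    case (insert x T)
    obtain i j where x: "x = (i,j)" by (cases x)
    define c where "c = (if i < b \<and> j < b then X $$ (i,j) else 0)"
    have "XT (insert x T) = XT T + c \<cdot>\<^sub>m Emat b i j"
      using insert(2) x by (intro eq_matI) (auto simp: XT_def Emat_def c_def)
    then have e: "F (XT (insert x T)) = F (XT T) + c \<cdot>\<^sub>m F (Emat b i j)"
      using Fadd[OF XTC smult_carrier_mat[OF EC]] Fsm[OF EC] by simp
    have d1: "F (XT T) \<in> carrier_mat b' b'" by (rule FC[OF XTC])
    have d2: "F (Emat b i j) \<in> carrier_mat b' b'" by (rule FC[OF EC])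
    have "F (XT (insert x T)) $$ (p,q) = F (XT T) $$ (p,q) + c * F (Emat b i j) $$ (p,q)"
      unfolding e using d1 d2 p q by simp
    also have "c * F (Emat b i j) $$ (p,q) = X $$ (i,j) * F (Emat b i j) $$ (p,q)"
    proof (cases "i < b \<and> j < b")
      case False
      have "Emat b i j = 0 \<cdot>\<^sub>m Emat b i j" using False by (intro eq_matI) (auto simp: Emat_def)
      then have "F (Emat b i j) = 0 \<cdot>\<^sub>m F (Emat b i j)" using Fsm[OF EC] by metis
      then have "F (Emat b i j) $$ (p,q) = 0" using FC[OF EC] p q
        by (metis carrier_matD index_smult_mat(1) mult_zero_left)
      then show ?thesis using False by (simp add: c_def)
    qed (simp add: c_def)
    finally show ?case using insert x by simp
  qed
  have "XT ({..<b} \<times> {..<b}) = X" using X by (intro eq_matI) (auto simp: XT_def)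
  then have "F X $$ (p,q) = (\<Sum>(i,j)\<in>{..<b} \<times> {..<b}. X $$ (i,j) * F (Emat b i j) $$ (p,q))"
    using main[of "{..<b} \<times> {..<b}"] by simp
  then show ?thesis by (simp add: sum.cartesian_product)
qed



lemma stinespring: assumes F: "cptp b b' F"
  shows "\<exists>e V. V \<in> carrier_mat (b'*e) b \<and> adj V * V = 1\<^sub>m b \<and>
           (\<forall>X \<in> carrier_mat b b. F X = ptrace_last b' e (V * X * adj V))"
proof -
  have FC: "\<And>Y. Y \<in> carrier_mat b b \<Longrightarrow> F Y \<in> carrier_mat b' b'" using F by (simp add: cptp_def)
  have Ftr: "\<And>Y. Y \<in> carrier_mat b b \<Longrightarrow> tr (F Y) = tr Y" using F by (simp add: cptp_def)
  have EC: "\<And>i j. Emat b i j \<in> carrier_mat b b" by (simp add: Emat_def)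
  define MO where "MO = mat (b*b) 1 (\<lambda>(r,l). if r mod b = r div b then (1::complex) else 0)"
  have MOC: "MO \<in> carrier_mat (b*b) 1" by (simp add: MO_def)
  define Om where "Om = MO * adj MO"
  have Opsd: "psd (b*b) Om" unfolding Om_def by (rule psd_outer[OF MOC])
  have Oent: "\<And>r s. r < b*b \<Longrightarrow> s < b*b \<Longrightarrow> Om $$ (r,s) = (if r mod b = r div b \<and> s mod b = s div b then 1 else 0)"
  proof -
    fix r s assume rs: "r < b*b" "s < b*b"
    have "Om $$ (r,s) = (\<Sum>l<1. MO $$ (r,l) * adj MO $$ (l,s))"
      unfolding Om_def by (rule mult_entry[OF MOC adj_carrier[OF MOC] rs])
    also have "\<dots> = MO $$ (r,0) * cnj (MO $$ (s,0))" using rs MOC by simp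
    also have "\<dots> = (if r mod b = r div b \<and> s mod b = s div b then 1 else 0)" using rs by (simp add: MO_def)
    finally show "Om $$ (r,s) = (if r mod b = r div b \<and> s mod b = s div b then 1 else 0)" .
  qed
  define J where "J = id_tensor b b b' F Om"
  have Jpsd: "psd (b*b') J" using F Opsd by (simp add: cptp_def J_def)
  have Jent: "\<And>i j p q. i < b \<Longrightarrow> j < b \<Longrightarrow> p < b' \<Longrightarrow> q < b' \<Longrightarrow>
      J $$ (i*b'+p, j*b'+q) = F (Emat b i j) $$ (p,q)"
  proof -
    fix i j p q assume ij: "i < b" "j < b" and pq: "p < b'" "q < b'"
    have blk: "mat b b (\<lambda>(k,l). Om $$ (i*b + k, j*b + l)) = Emat b i j"
    proof (rule eq_matI)
      fix k l assume "k < dim_row (Emat b i j)" "l < dim_col (Emat b i j)"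
      then have kl: "k < b" "l < b" by (auto simp: Emat_def)
      have "Om $$ (i*b + k, j*b + l) = (if k = i \<and> l = j then 1 else 0)"
        using Oent[OF idx_bound[OF ij(1) kl(1)] idx_bound[OF ij(2) kl(2)]] divmod_aux[OF kl(1), of i] divmod_aux[OF kl(2), of j]
        by auto
      then show "mat b b (\<lambda>(k,l). Om $$ (i*b + k, j*b + l)) $$ (k,l) = Emat b i j $$ (k,l)"
        using kl by (simp add: Emat_def)
    qed (auto simp: Emat_def)
    show "J $$ (i*b'+p, j*b'+q) = F (Emat b i j) $$ (p,q)"
      unfolding J_def id_tensor_def using idx_bound[OF ij(1) pq(1)] idx_bound[OF ij(2) pq(2)]
        divmod_aux[OF pq(1), of i] divmod_aux[OF pq(2), of j] blk by simp
  qed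
  obtain e M where M: "M \<in> carrier_mat (b*b') e" "J = M * adj M" using chol[OF Jpsd] by blast
  have Ment: "\<And>r s. r < b*b' \<Longrightarrow> s < b*b' \<Longrightarrow> J $$ (r,s) = (\<Sum>c<e. M $$ (r,c) * cnj (M $$ (s,c)))"
    using M by (simp add: row_col[OF M(1) adj_carrier[OF M(1)]])
  define V where "V = mat (b'*e) b (\<lambda>(x,i). M $$ (i*b' + x div e, x mod e))"
  have VC: "V \<in> carrier_mat (b'*e) b" by (simp add: V_def)
  have Vent: "\<And>p c i. p < b' \<Longrightarrow> c < e \<Longrightarrow> i < b \<Longrightarrow> V $$ (p*e+c, i) = M $$ (i*b'+p, c)"
    using divmod_aux idx_bound by (simp add: V_def)
  have iso: "adj V * V = 1\<^sub>m b"
  proof (rule eq_matI)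
    fix i j assume "i < dim_row (1\<^sub>m b :: complex mat)" "j < dim_col (1\<^sub>m b :: complex mat)"
    then have ij: "i < b" "j < b" by auto
    have "(adj V * V) $$ (i,j) = (\<Sum>x<b'*e. adj V $$ (i,x) * V $$ (x,j))"
      by (rule mult_entry[OF adj_carrier[OF VC] VC ij])
    also have "\<dots> = (\<Sum>p<b'. \<Sum>c<e. adj V $$ (i,p*e+c) * V $$ (p*e+c,j))" by (rule sum_split_mult)
    also have "\<dots> = (\<Sum>p<b'. cnj (\<Sum>c<e. M $$ (i*b'+p, c) * cnj (M $$ (j*b'+p, c))))"
      using ij VC idx_bound by (intro sum.cong refl) (auto simp: cnj_sum Vent mult.commute)
    also have "\<dots> = (\<Sum>p<b'. cnj (F (Emat b i j) $$ (p,p)))"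
      using ij idx_bound by (intro sum.cong refl) (simp add: Ment[symmetric] Jent)
    also have "\<dots> = cnj (tr (F (Emat b i j)))" using FC[OF EC[of i j]] by (simp add: tr_def cnj_sum)
    also have "\<dots> = cnj (tr (Emat b i j))" using Ftr[OF EC] by simp
    also have "\<dots> = (1\<^sub>m b :: complex mat) $$ (i,j)" using ij
      by (cases "i = j") (auto simp: tr_def Emat_def sum.delta intro!: sum.neutral)
    finally show "(adj V * V) $$ (i,j) = (1\<^sub>m b :: complex mat) $$ (i,j)" .
  qed (use VC in auto)
  have st: "\<forall>X \<in> carrier_mat b b. F X = ptrace_last b' e (V * X * adj V)"
  proof
    fix X :: "complex mat" assume X: "X \<in> carrier_mat b b"
    show "F X = ptrace_last b' e (V * X * adj V)"
    proof (rule eq_matI)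
      fix p q assume "p < dim_row (ptrace_last b' e (V * X * adj V))" "q < dim_col (ptrace_last b' e (V * X * adj V))"
      then have pq: "p < b'" "q < b'" by (auto simp: ptrace_last_def)
      have "ptrace_last b' e (V * X * adj V) $$ (p,q) = (\<Sum>c<e. (V * X * adj V) $$ (p*e+c, q*e+c))"
        using pq by (simp add: ptrace_last_def)
      also have "\<dots> = (\<Sum>c<e. \<Sum>i<b. \<Sum>j<b. M $$ (i*b'+p, c) * X $$ (i,j) * cnj (M $$ (j*b'+q, c)))"
        using pq idx_bound by (intro sum.cong refl) (simp add: conj_entry[OF VC X] Vent)
      also have "\<dots> = (\<Sum>i<b. \<Sum>j<b. X $$ (i,j) * (\<Sum>c<e. M $$ (i*b'+p, c) * cnj (M $$ (j*b'+q, c))))"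
      proof -
        have "(\<Sum>c<e. \<Sum>i<b. \<Sum>j<b. M $$ (i*b'+p, c) * X $$ (i,j) * cnj (M $$ (j*b'+q, c))) =
            (\<Sum>i<b. \<Sum>c<e. \<Sum>j<b. M $$ (i*b'+p, c) * X $$ (i,j) * cnj (M $$ (j*b'+q, c)))" by (rule sum.swap)
        also have "\<dots> = (\<Sum>i<b. \<Sum>j<b. \<Sum>c<e. M $$ (i*b'+p, c) * X $$ (i,j) * cnj (M $$ (j*b'+q, c)))"
          by (rule sum.cong[OF refl]) (rule sum.swap)
        finally show ?thesis by (simp add: sum_distrib_left mult_ac)
      qed
      also have "\<dots> = (\<Sum>i<b. \<Sum>j<b. X $$ (i,j) * F (Emat b i j) $$ (p,q))"
        using pq idx_bound by (intro sum.cong refl) (simp add: Ment[symmetric] Jent)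
      also have "\<dots> = F X $$ (p,q)" using cptp_lin[OF F X pq] by simp
      finally show "F X $$ (p,q) = ptrace_last b' e (V * X * adj V) $$ (p,q)" by simp
    qed (use FC[OF X] in \<open>auto simp: ptrace_last_def\<close>)
  qed
  show ?thesis using VC iso st by blast
qed



definition liftC :: "complex mat \<Rightarrow> nat \<Rightarrow> complex mat" where
  "liftC V c = mat (dim_row V * c) (dim_col V * c) (\<lambda>(x,r). if x mod c = r mod c then V $$ (x div c, r div c) else 0)"

lemma liftC_dims[simp]: "dim_row (liftC V c) = dim_row V * c" "dim_col (liftC V c) = dim_col V * c"
  by (auto simp: liftC_def)

lemma liftC_carrier: "V \<in> carrier_mat a b \<Longrightarrow> liftC V c \<in> carrier_mat (a*c) (b*c)"
  by (auto simp: liftC_def)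

lemma liftC_idx: assumes V: "V \<in> carrier_mat a b" and y: "y < a" and z: "z < b" and c0: "c0 < c" and c1: "c1 < c"
  shows "liftC V c $$ (y*c+c0, z*c+c1) = (if c0 = c1 then V $$ (y,z) else 0)"
  using assms idx_bound[OF y c0] idx_bound[OF z c1] divmod_aux[OF c0, of y] divmod_aux[OF c1, of z]
  by (simp add: liftC_def)

lemma liftC_sum: assumes V: "V \<in> carrier_mat a b" and y: "y < a" and c0: "c0 < c"
  shows "(\<Sum>s<b*c. liftC V c $$ (y*c+c0, s) * f s) = (\<Sum>z<b. V $$ (y,z) * f (z*c+c0))"
proof -
  have "(\<Sum>s<b*c. liftC V c $$ (y*c+c0, s) * f s) = (\<Sum>z<b. \<Sum>c1<c. liftC V c $$ (y*c+c0, z*c+c1) * f (z*c+c1))"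
    by (rule sum_split_mult)
  also have "\<dots> = (\<Sum>z<b. \<Sum>c1<c. if c0 = c1 then V $$ (y,z) * f (z*c+c1) else 0)"
    using liftC_idx[OF V y _ c0] by (intro sum.cong refl) auto
  also have "\<dots> = (\<Sum>z<b. V $$ (y,z) * f (z*c+c0))" using c0 by (simp add: sum.delta')
  finally show ?thesis .
qed

lemma liftC_iso: assumes V: "V \<in> carrier_mat a b" and VV: "adj V * V = 1\<^sub>m b"
  shows "adj (liftC V c) * liftC V c = 1\<^sub>m (b*c)"
proof (rule eq_matI)
  fix r s assume "r < dim_row (1\<^sub>m (b*c) :: complex mat)" "s < dim_col (1\<^sub>m (b*c) :: complex mat)"
  then have r: "r < b*c" and s: "s < b*c" by auto
  have c0: "c > 0" using r by (cases c) auto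
  have rd: "r div c < b" and sd: "s div c < b" using r s by (auto simp: less_mult_imp_div_less)
  have rm: "r mod c < c" and sm: "s mod c < c" using c0 by auto
  have WC: "liftC V c \<in> carrier_mat (a*c) (b*c)" by (rule liftC_carrier[OF V])
  have "(adj (liftC V c) * liftC V c) $$ (r,s) = (\<Sum>x<a*c. adj (liftC V c) $$ (r,x) * liftC V c $$ (x,s))"
    by (rule mult_entry[OF adj_carrier[OF WC] WC r s])
  also have "\<dots> = (\<Sum>y<a. \<Sum>d<c. adj (liftC V c) $$ (r,y*c+d) * liftC V c $$ (y*c+d,s))"
    by (rule sum_split_mult)
  also have "\<dots> = (\<Sum>y<a. \<Sum>d<c. if d = r mod c then cnj (V $$ (y, r div c)) * (if d = s mod c then V $$ (y, s div c) else 0) else 0)"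
  proof (intro sum.cong refl)
    fix y d assume y: "y \<in> {..<a}" and d: "d \<in> {..<c}"
    have x: "y*c+d < a*c" using y d idx_bound by auto
    have r': "r = (r div c) * c + r mod c" and s': "s = (s div c) * c + s mod c" by simp_all
    have e1: "liftC V c $$ (y*c+d, r) = (if d = r mod c then V $$ (y, r div c) else 0)"
      using liftC_idx[OF V _ rd _ rm, of y d] y d r' by simp
    have e2: "liftC V c $$ (y*c+d, s) = (if d = s mod c then V $$ (y, s div c) else 0)"
      using liftC_idx[OF V _ sd _ sm, of y d] y d s' by simp
    show "adj (liftC V c) $$ (r,y*c+d) * liftC V c $$ (y*c+d,s) =
      (if d = r mod c then cnj (V $$ (y, r div c)) * (if d = s mod c then V $$ (y, s div c) else 0) else 0)"
      using x r s V e1 e2 by auto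
  qed
  also have "\<dots> = (\<Sum>y<a. cnj (V $$ (y, r div c)) * (if r mod c = s mod c then V $$ (y, s div c) else 0))"
    using rm by (simp add: sum.delta)
  also have "\<dots> = (if r mod c = s mod c then (adj V * V) $$ (r div c, s div c) else 0)"
    using V rd sd by (simp add: row_col[OF adj_carrier[OF V] V])
  also have "\<dots> = (if r = s then 1 else 0)"
  proof -
    have eq: "(r div c = s div c \<and> r mod c = s mod c) = (r = s)" by (metis div_mult_mod_eq)
    show ?thesis using VV rd sd eq by auto
  qed
  also have "\<dots> = (1\<^sub>m (b*c) :: complex mat) $$ (r,s)" using r s by simp
  finally show "(adj (liftC V c) * liftC V c) $$ (r,s) = (1\<^sub>m (b*c) :: complex mat) $$ (r,s)" .
qed (use V in \<open>simp_all add: liftC_def\<close>)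

lemma liftA_conj_entry: assumes W: "W \<in> carrier_mat m n" and S: "S \<in> carrier_mat (k*n) (k*n)"
  and i: "i < k" and i': "i' < k" and j: "j < m" and j': "j' < m"
  shows "(liftA k W * S * adj (liftA k W)) $$ (i*m+j, i'*m+j') =
    (\<Sum>s<n. W $$ (j,s) * (\<Sum>t<n. S $$ (i*n+s, i'*n+t) * cnj (W $$ (j',t))))"
proof -
  have US: "liftA k W * S \<in> carrier_mat (k*m) (k*n)" using liftA_carrier[OF W, of k] S by simp
  have "(liftA k W * S * adj (liftA k W)) $$ (i*m+j, i'*m+j') = (\<Sum>t<n. (liftA k W * S) $$ (i*m+j, i'*n+t) * cnj (W $$ (j',t)))"
    by (rule liftA_mult_right[OF W US idx_bound[OF i j] i' j'])
  also have "\<dots> = (\<Sum>t<n. (\<Sum>s<n. W $$ (j,s) * S $$ (i*n+s, i'*n+t)) * cnj (W $$ (j',t)))"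
    using idx_bound[OF i' _] by (intro sum.cong refl) (simp add: liftA_mult_left[OF W S i j])
  also have "\<dots> = (\<Sum>s<n. W $$ (j,s) * (\<Sum>t<n. S $$ (i*n+s, i'*n+t) * cnj (W $$ (j',t))))"
    by (simp add: sum_distrib_right sum_distrib_left mult.assoc) (rule sum.swap)
  finally show ?thesis .
qed



lemma liftC_sum2: assumes V: "V \<in> carrier_mat a b" and y: "y < a" and c0: "c0 < c"
  shows "(\<Sum>s<b*c. f s * cnj (liftC V c $$ (y*c+c0, s))) = (\<Sum>z<b. f (z*c+c0) * cnj (V $$ (y,z)))"
proof -
  have "(\<Sum>s<b*c. f s * cnj (liftC V c $$ (y*c+c0, s))) = (\<Sum>z<b. \<Sum>c1<c. f (z*c+c1) * cnj (liftC V c $$ (y*c+c0, z*c+c1)))"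
    by (rule sum_split_mult)
  also have "\<dots> = (\<Sum>z<b. \<Sum>c1<c. if c0 = c1 then f (z*c+c1) * cnj (V $$ (y,z)) else 0)"
    using liftC_idx[OF V y _ c0] by (intro sum.cong refl) auto
  also have "\<dots> = (\<Sum>z<b. f (z*c+c0) * cnj (V $$ (y,z)))" using c0 by (simp add: sum.delta')
  finally show ?thesis .
qed

lemma ptrace_ext:
  assumes V: "V \<in> carrier_mat (dB'*e) dB"
    and st: "\<forall>X \<in> carrier_mat dB dB. F X = ptrace_last dB' e (V * X * adj V)"
    and S: "S \<in> carrier_mat (dA*(dB*dC)) (dA*(dB*dC))"
  shows "ptrace_last (dA*dB') (e*dC) (liftA dA (liftC V dC) * S * adj (liftA dA (liftC V dC)))
     = id_tensor dA dB dB' F (ptrace_last (dA*dB) dC S)"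
proof (rule eq_matI)
  let ?W = "liftC V dC"
  let ?m = "dB'*e*dC" and ?n = "dB*dC"
  let ?rho = "ptrace_last (dA*dB) dC S"
  have WC: "?W \<in> carrier_mat ?m ?n" using liftC_carrier[OF V] .
  fix x y assume "x < dim_row (id_tensor dA dB dB' F ?rho)" "y < dim_col (id_tensor dA dB dB' F ?rho)"
  then have x: "x < dA*dB'" and y: "y < dA*dB'" by (auto simp: id_tensor_def)
  have b0: "dB' > 0" using x by (cases dB') auto
  define a p a' q where "a = x div dB'" "p = x mod dB'" "a' = y div dB'" "q = y mod dB'"
  have ap: "a < dA" "p < dB'" "a' < dA" "q < dB'" "x = a*dB'+p" "y = a'*dB'+q"
    using x y b0 by (auto simp: a_p_a'_q_def less_mult_imp_div_less)
  define rA where "rA = mat dB dB (\<lambda>(k,l). ?rho $$ (a*dB + k, a'*dB + l))"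
  have rAC: "rA \<in> carrier_mat dB dB" by (simp add: rA_def)
  have rAe: "\<And>b b'. b < dB \<Longrightarrow> b' < dB \<Longrightarrow> rA $$ (b,b') = (\<Sum>c<dC. S $$ ((a*dB+b)*dC + c, (a'*dB+b')*dC + c))"
    using idx_bound ap by (simp add: rA_def ptrace_last_def)
  have "ptrace_last (dA*dB') (e*dC) (liftA dA ?W * S * adj (liftA dA ?W)) $$ (x,y)
     = (\<Sum>c'<e*dC. (liftA dA ?W * S * adj (liftA dA ?W)) $$ (x*(e*dC)+c', y*(e*dC)+c'))"
    using x y by (simp add: ptrace_last_def)
  also have "\<dots> = (\<Sum>f<e. \<Sum>c<dC. (liftA dA ?W * S * adj (liftA dA ?W)) $$ (x*(e*dC)+(f*dC+c), y*(e*dC)+(f*dC+c)))"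
    by (rule sum_split_mult)
  also have "\<dots> = (\<Sum>f<e. \<Sum>c<dC. \<Sum>b<dB. V $$ (p*e+f, b) * (\<Sum>b'<dB. S $$ ((a*dB+b)*dC+c, (a'*dB+b')*dC+c) * cnj (V $$ (q*e+f, b'))))"
  proof (intro sum.cong refl)
    fix f c assume f: "f \<in> {..<e}" and c: "c \<in> {..<dC}"
    have pf: "p*e+f < dB'*e" and qf: "q*e+f < dB'*e" using idx_bound ap f by auto
    have j1: "(p*e+f)*dC+c < ?m" and j2: "(q*e+f)*dC+c < ?m" using idx_bound pf qf c by auto
    have i1: "x*(e*dC)+(f*dC+c) = a*?m + ((p*e+f)*dC+c)" using ap by (simp add: algebra_simps)
    have i2: "y*(e*dC)+(f*dC+c) = a'*?m + ((q*e+f)*dC+c)" using ap by (simp add: algebra_simps)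
    have "(liftA dA ?W * S * adj (liftA dA ?W)) $$ (a*?m + ((p*e+f)*dC+c), a'*?m + ((q*e+f)*dC+c))
      = (\<Sum>s<?n. ?W $$ ((p*e+f)*dC+c, s) * (\<Sum>t<?n. S $$ (a*?n+s, a'*?n+t) * cnj (?W $$ ((q*e+f)*dC+c, t))))"
      by (rule liftA_conj_entry[OF WC _ ap(1) ap(3) j1 j2]) (use S in \<open>simp add: mult.assoc\<close>)
    also have "\<dots> = (\<Sum>b<dB. V $$ (p*e+f, b) * (\<Sum>t<?n. S $$ (a*?n+(b*dC+c), a'*?n+t) * cnj (?W $$ ((q*e+f)*dC+c, t))))"
      using liftC_sum[OF V pf, of c dC] c by simp
    also have "\<dots> = (\<Sum>b<dB. V $$ (p*e+f, b) * (\<Sum>b'<dB. S $$ (a*?n+(b*dC+c), a'*?n+(b'*dC+c)) * cnj (V $$ (q*e+f, b'))))"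
      using liftC_sum2[OF V qf, of c dC] c by simp
    also have "\<dots> = (\<Sum>b<dB. V $$ (p*e+f, b) * (\<Sum>b'<dB. S $$ ((a*dB+b)*dC+c, (a'*dB+b')*dC+c) * cnj (V $$ (q*e+f, b'))))"
      by (simp add: algebra_simps)
    finally have r: "(liftA dA ?W * S * adj (liftA dA ?W)) $$ (a*?m + ((p*e+f)*dC+c), a'*?m + ((q*e+f)*dC+c)) =
      (\<Sum>b<dB. V $$ (p*e+f, b) * (\<Sum>b'<dB. S $$ ((a*dB+b)*dC+c, (a'*dB+b')*dC+c) * cnj (V $$ (q*e+f, b'))))" .
    show "(liftA dA ?W * S * adj (liftA dA ?W)) $$ (x*(e*dC)+(f*dC+c), y*(e*dC)+(f*dC+c)) =
      (\<Sum>b<dB. V $$ (p*e+f, b) * (\<Sum>b'<dB. S $$ ((a*dB+b)*dC+c, (a'*dB+b')*dC+c) * cnj (V $$ (q*e+f, b'))))"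
      unfolding i1 i2 by (rule r)
  qed
  also have "\<dots> = (\<Sum>f<e. \<Sum>b<dB. \<Sum>b'<dB. V $$ (p*e+f, b) * rA $$ (b,b') * cnj (V $$ (q*e+f, b')))"
  proof (rule sum.cong[OF refl])
    fix f assume f: "f \<in> {..<e}"
    have "(\<Sum>c<dC. \<Sum>b<dB. V $$ (p*e+f, b) * (\<Sum>b'<dB. S $$ ((a*dB+b)*dC+c, (a'*dB+b')*dC+c) * cnj (V $$ (q*e+f, b'))))
       = (\<Sum>c<dC. \<Sum>b<dB. \<Sum>b'<dB. V $$ (p*e+f, b) * S $$ ((a*dB+b)*dC+c, (a'*dB+b')*dC+c) * cnj (V $$ (q*e+f, b')))"
      by (simp add: sum_distrib_left mult.assoc)
    also have "\<dots> = (\<Sum>b<dB. \<Sum>c<dC. \<Sum>b'<dB. V $$ (p*e+f, b) * S $$ ((a*dB+b)*dC+c, (a'*dB+b')*dC+c) * cnj (V $$ (q*e+f, b')))"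
      by (rule sum.swap)
    also have "\<dots> = (\<Sum>b<dB. \<Sum>b'<dB. \<Sum>c<dC. V $$ (p*e+f, b) * S $$ ((a*dB+b)*dC+c, (a'*dB+b')*dC+c) * cnj (V $$ (q*e+f, b')))"
      by (rule sum.cong[OF refl]) (rule sum.swap)
    also have "\<dots> = (\<Sum>b<dB. \<Sum>b'<dB. V $$ (p*e+f, b) * rA $$ (b,b') * cnj (V $$ (q*e+f, b')))"
      using rAe by (intro sum.cong refl) (simp add: sum_distrib_left sum_distrib_right)
    finally show "(\<Sum>c<dC. \<Sum>b<dB. V $$ (p*e+f, b) * (\<Sum>b'<dB. S $$ ((a*dB+b)*dC+c, (a'*dB+b')*dC+c) * cnj (V $$ (q*e+f, b'))))
       = (\<Sum>b<dB. \<Sum>b'<dB. V $$ (p*e+f, b) * rA $$ (b,b') * cnj (V $$ (q*e+f, b')))" .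
  qed
  also have "\<dots> = ptrace_last dB' e (V * rA * adj V) $$ (p,q)"
    using ap(1-4) idx_bound by (simp add: ptrace_last_def conj_entry[OF V rAC])
  also have "\<dots> = F rA $$ (p,q)" using st rAC by simp
  also have "\<dots> = F (mat dB dB (\<lambda>(k,l). ?rho $$ ((x div dB')*dB + k, (y div dB')*dB + l))) $$ (x mod dB', y mod dB')"
    by (simp add: rA_def a_p_a'_q_def)
  also have "\<dots> = id_tensor dA dB dB' F ?rho $$ (x,y)"
    using x y by (simp add: id_tensor_def)
  finally show "ptrace_last (dA*dB') (e*dC) (liftA dA ?W * S * adj (liftA dA ?W)) $$ (x,y) = id_tensor dA dB dB' F ?rho $$ (x,y)" .
qed (auto simp: id_tensor_def ptrace_last_def)



theorem proposition1:
  fixes dA dB dB' :: nat and \<rho> :: "complex mat" and \<epsilon> :: real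
    and F :: "complex mat \<Rightarrow> complex mat"
  assumes "density (dA * dB) \<rho>"
    and "0 \<le> \<epsilon>"
    and "cptp dB dB' F"
  shows "R_bar dA dB \<epsilon> \<rho> \<le> R_bar dA dB' \<epsilon> (id_tensor dA dB dB' F \<rho>)"
proof -
  obtain e V where V: "V \<in> carrier_mat (dB'*e) dB" "adj V * V = 1\<^sub>m dB"
    and st: "\<forall>X \<in> carrier_mat dB dB. F X = ptrace_last dB' e (V * X * adj V)"
    using stinespring[OF assms(3)] by blast
  show ?thesis unfolding R_bar_def
  proof (rule Sup_least)
    fix r assume "r \<in> {R_eps dA (dB * dC) \<epsilon> \<sigma> | dC \<sigma>. density (dA * dB * dC) \<sigma> \<and> ptrace_last (dA * dB) dC \<sigma> = \<rho>}"
    then obtain dC \<sigma> where r: "r = R_eps dA (dB * dC) \<epsilon> \<sigma>" and d: "density (dA * dB * dC) \<sigma>"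
      and pt: "ptrace_last (dA * dB) dC \<sigma> = \<rho>" by blast
    let ?W = "liftC V dC"
    let ?U = "liftA dA ?W"
    let ?s = "?U * \<sigma> * adj ?U"
    have WC: "?W \<in> carrier_mat (dB'*e*dC) (dB*dC)" using liftC_carrier[OF V(1)] .
    have WW: "adj ?W * ?W = 1\<^sub>m (dB*dC)" using liftC_iso[OF V] .
    have UC: "?U \<in> carrier_mat (dA*(dB'*e*dC)) (dA*(dB*dC))" using liftA_carrier[OF WC] .
    have UU: "adj ?U * ?U = 1\<^sub>m (dA*(dB*dC))" using liftA_iso[OF WC WW] .
    have psdS: "psd (dA*(dB*dC)) \<sigma>" using d by (simp add: density_def mult.assoc)
    have SC: "\<sigma> \<in> carrier_mat (dA*(dB*dC)) (dA*(dB*dC))" using psdS by (simp add: psd_def)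
    have trS: "tr \<sigma> = 1" using d by (simp add: density_def)
    have psd': "psd (dA*(dB'*e*dC)) ?s" by (rule psd_conj[OF psdS UC])
    have "tr ?s = tr (adj ?U * (?U * \<sigma>))"
      by (rule tr_comm[OF mult_carrier_mat[OF UC SC] adj_carrier[OF UC]])
    also have "\<dots> = tr \<sigma>" using assoc_mult_mat[OF adj_carrier[OF UC] UC SC] UU SC by simp
    finally have trs: "tr ?s = 1" using trS by simp
    have dens: "density (dA * dB' * (e*dC)) ?s"
      using psd' trs by (simp add: density_def mult.assoc)
    have ptr: "ptrace_last (dA * dB') (e*dC) ?s = id_tensor dA dB dB' F \<rho>"
      using ptrace_ext[OF V(1) st SC] pt by simp
    have "R_eps dA (dB'*e*dC) \<epsilon> ?s = R_eps dA (dB*dC) \<epsilon> \<sigma>"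
      by (rule R_eps_iso[OF WC WW SC])
    then have req: "r = R_eps dA (dB' * (e*dC)) \<epsilon> ?s" using r by (simp add: mult.assoc)
    have "R_eps dA (dB' * (e*dC)) \<epsilon> ?s \<in> {R_eps dA (dB' * dC') \<epsilon> \<sigma>' | dC' \<sigma>'.
        density (dA * dB' * dC') \<sigma>' \<and> ptrace_last (dA * dB') dC' \<sigma>' = id_tensor dA dB dB' F \<rho>}"
      using dens ptr by blast
    then show "r \<le> Sup {R_eps dA (dB' * dC') \<epsilon> \<sigma>' | dC' \<sigma>'.
        density (dA * dB' * dC') \<sigma>' \<and> ptrace_last (dA * dB') dC' \<sigma>' = id_tensor dA dB dB' F \<rho>}"
      unfolding req by (rule Sup_upper)
  qed
qed


end
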